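(* Let $u,v\in G$ be cyclically minimal root elements which are blocks, and let $g\in G$ satisfy $u^g=g^{-1}\circ u\circ g$. If $u\in C(v)$ and $u^g\in C(v)$, then $g\in C(v)$.
   Context: Let $\Gamma$ be a finite simple undirected graph with vertex set $X$, and let $G=G(\Gamma)=\langle X\mid [x,y]=1 \text{ whenever } x,y \text{ are joined by an edge of }\Gamma\rangle$ be the (free) partially commutative group with commutation graph $\Gamma$. For a word $w$ over $X\cup X^{-1}$, $\alpha(w)$ is the set of $x\in X$ such that $x$ or $x^{-1}$ occurs in $w$. A word is minimal if no shorter word represents the same element of $G$. For $g\in G$, $l(g)$ is the length of a minimal word representing $g$, and $\alpha(g)=\alpha(w)$ for any minimal word $w$ representing $g$. For $g_1,\dots,g_r\in G$, $g_1\circ\cdots\circ g_r$ denotes the product together with the assertion $l(g_1\cdots g_r)=l(g_1)+\cdots+l(g_r)$. We write $g^h=h^{-1}gh$; $C(S)$ is the centraliser of $S$ in $G$. An element $g$ is cyclically minimal if $l(g)\le l(h^{-1}gh)$ for all $h\in G$. For $Z\subseteq X$, $\Phi(Z)$ is the graph with vertex set $Z$ in which $x\ne y$ are joined iff $xy\ne yx$ in $G$; a cyclically minimal element $g$ is a block if $\Phi(\alpha(g))$ is connected. An element $g\in G$ is a root element if $g$ is not of the form $h^n$ for any $h\in G$ and integer $n\ge2$. *)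

theory Defs
  imports Main
begin

text \<open>The vertex set X is the (finite) type 'a;
  the commutation graph is a symmetric irreflexive relation E on 'a.
  A letter (x, False) stands for x, (x, True) for x^-1.
  Elements of G are represented by words; equality in G is pc_eq E.\<close>

type_synonym 'a letter = "'a \<times> bool"

definition inv_letter :: "'a letter \<Rightarrow> 'a letter" where
  "inv_letter l = (fst l, \<not> snd l)"

definition inv_word :: "'a letter list \<Rightarrow> 'a letter list" where
  "inv_word w = rev (map inv_letter w)"

inductive pc_step :: "('a \<Rightarrow> 'a \<Rightarrow> bool) \<Rightarrow> 'a letter list \<Rightarrow> 'a letter list \<Rightarrow> bool"
  for E where
  cancel: "pc_step E (xs @ [(x, b), (x, \<not> b)] @ ys) (xs @ ys)"
| commute: "E x y \<Longrightarrow> pc_step E (xs @ [(x, b), (y, c)] @ ys) (xs @ [(y, c), (x, b)] @ ys)"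

definition pc_eq :: "('a \<Rightarrow> 'a \<Rightarrow> bool) \<Rightarrow> 'a letter list \<Rightarrow> 'a letter list \<Rightarrow> bool" where
  "pc_eq E = (sup (pc_step E) (pc_step E)\<inverse>\<inverse>)\<^sup>*\<^sup>*"

definition pc_minimal :: "('a \<Rightarrow> 'a \<Rightarrow> bool) \<Rightarrow> 'a letter list \<Rightarrow> bool" where
  "pc_minimal E w = (\<forall>w'. pc_eq E w w' \<longrightarrow> length w \<le> length w')"

definition pc_len :: "('a \<Rightarrow> 'a \<Rightarrow> bool) \<Rightarrow> 'a letter list \<Rightarrow> nat" where
  "pc_len E w = (LEAST n. \<exists>w'. pc_eq E w w' \<and> length w' = n)"

definition pc_alpha :: "('a \<Rightarrow> 'a \<Rightarrow> bool) \<Rightarrow> 'a letter list \<Rightarrow> 'a set" where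
  "pc_alpha E w = fst ` set (SOME w'. pc_eq E w w' \<and> pc_minimal E w')"

definition cyc_minimal :: "('a \<Rightarrow> 'a \<Rightarrow> bool) \<Rightarrow> 'a letter list \<Rightarrow> bool" where
  "cyc_minimal E w = (\<forall>h. pc_len E w \<le> pc_len E (inv_word h @ w @ h))"

definition gens_commute :: "('a \<Rightarrow> 'a \<Rightarrow> bool) \<Rightarrow> 'a \<Rightarrow> 'a \<Rightarrow> bool" where
  "gens_commute E x y = pc_eq E [(x, False), (y, False)] [(y, False), (x, False)]"

definition Phi_connected :: "('a \<Rightarrow> 'a \<Rightarrow> bool) \<Rightarrow> 'a set \<Rightarrow> bool" where
  "Phi_connected E Z = (\<forall>x\<in>Z. \<forall>y\<in>Z.
     (\<lambda>a b. a \<in> Z \<and> b \<in> Z \<and> a \<noteq> b \<and> \<not> gens_commute E a b)\<^sup>*\<^sup>* x y)"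

definition is_block :: "('a \<Rightarrow> 'a \<Rightarrow> bool) \<Rightarrow> 'a letter list \<Rightarrow> bool" where
  "is_block E w = (cyc_minimal E w \<and> Phi_connected E (pc_alpha E w))"

definition word_pow :: "'a letter list \<Rightarrow> nat \<Rightarrow> 'a letter list" where
  "word_pow w n = concat (replicate n w)"

definition root_element :: "('a \<Rightarrow> 'a \<Rightarrow> bool) \<Rightarrow> 'a letter list \<Rightarrow> bool" where
  "root_element E w = (\<not> (\<exists>h n. n \<ge> 2 \<and> pc_eq E w (word_pow h n)))"

definition in_centraliser :: "('a \<Rightarrow> 'a \<Rightarrow> bool) \<Rightarrow> 'a letter list \<Rightarrow> 'a letter list \<Rightarrow> bool" where
  "in_centraliser E g v = pc_eq E (g @ v) (v @ g)"

end

theory Submission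
  imports Defs
begin

lemma inv_letter_inv[simp]: "inv_letter (inv_letter l) = l"
  by (simp add: inv_letter_def)
lemma fst_inv_letter[simp]: "fst (inv_letter l) = fst l"
  by (simp add: inv_letter_def)
lemma inv_letter_neq[simp]: "inv_letter l \<noteq> l" "l \<noteq> inv_letter l"
  by (cases l; simp add: inv_letter_def)+
lemma inv_word_Nil[simp]: "inv_word [] = []" by (simp add: inv_word_def)
lemma inv_word_Cons[simp]: "inv_word (l # w) = inv_word w @ [inv_letter l]" by (simp add: inv_word_def)
lemma inv_word_append[simp]: "inv_word (a @ b) = inv_word b @ inv_word a" by (simp add: inv_word_def)
lemma inv_word_inv[simp]: "inv_word (inv_word w) = w" by (induct w) auto
lemma length_inv_word[simp]: "length (inv_word w) = length w" by (simp add: inv_word_def)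
lemma set_inv_word_fst[simp]: "fst ` set (inv_word w) = fst ` set w"
  by (induct w) auto

lemma pc_eq_refl[simp]: "pc_eq E w w" by (simp add: pc_eq_def)
lemma pc_eq_sym: "pc_eq E a b \<Longrightarrow> pc_eq E b a"
  unfolding pc_eq_def
proof (induct rule: rtranclp_induct)
  case base then show ?case by simp
next
  case (step y z)
  then have "(sup (pc_step E) (pc_step E)\<inverse>\<inverse>) z y" by auto
  then show ?case using step(3) by (meson converse_rtranclp_into_rtranclp)
qed
lemma pc_eq_trans[trans]: "pc_eq E a b \<Longrightarrow> pc_eq E b c \<Longrightarrow> pc_eq E a c"
  unfolding pc_eq_def by auto
lemma pc_step_eq: "pc_step E a b \<Longrightarrow> pc_eq E a b"
  unfolding pc_eq_def by auto

lemma pc_step_ctx: "pc_step E a b \<Longrightarrow> pc_step E (p @ a @ q) (p @ b @ q)"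
proof (induct rule: pc_step.cases)
  case (cancel xs x b ys)
  then show ?case using pc_step.cancel[of E "p @ xs" x b "ys @ q"] by simp
next
  case (commute x y xs b c ys)
  then show ?case using pc_step.commute[of E x y "p @ xs" b c "ys @ q"] by simp
qed

lemma pc_eq_ctx: "pc_eq E a b \<Longrightarrow> pc_eq E (p @ a @ q) (p @ b @ q)"
  unfolding pc_eq_def
proof (induct rule: rtranclp_induct)
  case base then show ?case by simp
next
  case (step y z)
  then have "(sup (pc_step E) (pc_step E)\<inverse>\<inverse>) (p @ y @ q) (p @ z @ q)"
    using pc_step_ctx by fastforce
  then show ?case using step(3) by (meson rtranclp.rtrancl_into_rtrancl)
qed

lemma pc_eq_app: "pc_eq E a a' \<Longrightarrow> pc_eq E b b' \<Longrightarrow> pc_eq E (a @ b) (a' @ b')"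
  using pc_eq_ctx[of E a a' "[]" b] pc_eq_ctx[of E b b' a' "[]"] pc_eq_trans by fastforce

lemma pc_eq_appL: "pc_eq E b b' \<Longrightarrow> pc_eq E (a @ b) (a @ b')"
  by (simp add: pc_eq_app)
lemma pc_eq_appR: "pc_eq E a a' \<Longrightarrow> pc_eq E (a @ b) (a' @ b)"
  by (simp add: pc_eq_app)

lemma pc_eq_cancel2: "pc_eq E [l, inv_letter l] []"
proof -
  obtain x b where l: "l = (x, b)" by fastforce
  have "pc_step E ([] @ [(x, b), (x, \<not> b)] @ []) ([] @ [])" by (rule pc_step.cancel)
  then show ?thesis using l by (simp add: inv_letter_def pc_step_eq)
qed

lemma pc_eq_inv_right: "pc_eq E (w @ inv_word w) []"
proof (induct w)
  case Nil then show ?case by simp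
next
  case (Cons l w)
  have "pc_eq E ([l] @ (w @ inv_word w) @ [inv_letter l]) ([l] @ [] @ [inv_letter l])"
    using pc_eq_ctx[OF Cons] by blast
  then have "pc_eq E ((l # w) @ inv_word (l # w)) [l, inv_letter l]" by simp
  then show ?case using pc_eq_cancel2 pc_eq_trans by blast
qed

lemma pc_eq_inv_left: "pc_eq E (inv_word w @ w) []"
  using pc_eq_inv_right[of E "inv_word w"] by simp

lemma pc_eq_cancel_right: "pc_eq E (a @ c) (b @ c) \<Longrightarrow> pc_eq E a b"
proof -
  assume h: "pc_eq E (a @ c) (b @ c)"
  have "pc_eq E a (a @ c @ inv_word c)" using pc_eq_appL[OF pc_eq_sym[OF pc_eq_inv_right[of E c]], of a] by simp
  also have "pc_eq E \<dots> (b @ c @ inv_word c)" using pc_eq_appR[OF h, of "inv_word c"] by simp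
  also have "pc_eq E \<dots> b" using pc_eq_appL[OF pc_eq_inv_right[of E c], of b] by simp
  finally show ?thesis .
qed

lemma pc_eq_cancel_left: "pc_eq E (c @ a) (c @ b) \<Longrightarrow> pc_eq E a b"
proof -
  assume h: "pc_eq E (c @ a) (c @ b)"
  have "pc_eq E a (inv_word c @ c @ a)" using pc_eq_appR[OF pc_eq_sym[OF pc_eq_inv_left[of E c]], of a] by simp
  also have "pc_eq E \<dots> (inv_word c @ c @ b)" using pc_eq_appL[OF h, of "inv_word c"] by simp
  also have "pc_eq E \<dots> b" using pc_eq_appR[OF pc_eq_inv_left[of E c], of b] by simp
  finally show ?thesis .
qed

locale pcg =
  fixes E :: "'a \<Rightarrow> 'a \<Rightarrow> bool"
  assumes symE: "symp E" and irrE: "irreflp E"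
begin

lemma Esym: "E x y \<Longrightarrow> E y x" using symE by (meson sympD)
lemma Eirr[simp]: "\<not> E x x" using irrE by (meson irreflpD)

lemma step_swap: "E (fst l1) (fst l2) \<Longrightarrow> pc_step E (xs @ [l1, l2] @ ys) (xs @ [l2, l1] @ ys)"
  using pc_step.commute[of E "fst l1" "fst l2" xs "snd l1" "snd l2" ys] by simp

lemma eq_swap: "E (fst l1) (fst l2) \<Longrightarrow> pc_eq E (xs @ [l1, l2] @ ys) (xs @ [l2, l1] @ ys)"
  by (rule pc_step_eq, rule step_swap)

lemma pc_step_inv: "pc_step E a b \<Longrightarrow> pc_step E (inv_word a) (inv_word b)"
proof (induct rule: pc_step.cases)
  case (cancel xs x b ys)
  then show ?case using pc_step.cancel[of E "inv_word ys" x b "inv_word xs"]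
    by (simp add: inv_letter_def)
next
  case (commute x y xs b c ys)
  then show ?case using pc_step.commute[of E y x "inv_word ys" "\<not> c" "\<not> b" "inv_word xs"] Esym
    by (simp add: inv_letter_def)
qed

lemma pc_eq_inv: "pc_eq E a b \<Longrightarrow> pc_eq E (inv_word a) (inv_word b)"
  unfolding pc_eq_def
proof (induct rule: rtranclp_induct)
  case base then show ?case by simp
next
  case (step y z)
  then have "(sup (pc_step E) (pc_step E)\<inverse>\<inverse>) (inv_word y) (inv_word z)"
    using pc_step_inv by fastforce
  then show ?case using step(3) by (meson rtranclp.rtrancl_into_rtrancl)
qed

lemma move_right: "(\<forall>m\<in>set t. E (fst c) (fst m)) \<Longrightarrow> pc_eq E (c # t) (t @ [c])"
proof (induct t)
  case Nil then show ?case by simp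
next
  case (Cons m t)
  have "pc_eq E (c # m # t) (m # c # t)" using eq_swap[of c m "[]" t] Cons(2) by simp
  also have "pc_eq E \<dots> (m # t @ [c])" using pc_eq_appL[OF Cons(1), of "[m]"] Cons(2) by simp
  finally show ?case by simp
qed

end

definition proj :: "'a \<Rightarrow> 'a \<Rightarrow> 'a letter list \<Rightarrow> 'a letter list" where
  "proj x y w = filter (\<lambda>l. fst l = x \<or> fst l = y) w"

definition teq :: "('a \<Rightarrow> 'a \<Rightarrow> bool) \<Rightarrow> 'a letter list \<Rightarrow> 'a letter list \<Rightarrow> bool" where
  "teq E w w' = (\<forall>x y. \<not> E x y \<longrightarrow> proj x y w = proj x y w')"

definition sig :: "('a \<Rightarrow> 'a \<Rightarrow> bool) \<Rightarrow> 'a \<Rightarrow> 'a letter list \<Rightarrow> 'a letter list" where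
  "sig E x w = filter (\<lambda>l. \<not> E x (fst l)) w"

fun cl :: "('a \<Rightarrow> 'a \<Rightarrow> bool) \<Rightarrow> 'a letter \<Rightarrow> 'a letter list \<Rightarrow> 'a letter list option" where
  "cl E a [] = None"
| "cl E a (l # r) = (case cl E a r of Some r' \<Rightarrow> Some (l # r')
     | None \<Rightarrow> (if l = inv_letter a \<and> (\<forall>m\<in>set r. E (fst a) (fst m)) then Some r else None))"

definition red :: "('a \<Rightarrow> 'a \<Rightarrow> bool) \<Rightarrow> 'a letter list \<Rightarrow> 'a letter \<Rightarrow> 'a letter list" where
  "red E r a = (case cl E a r of Some r' \<Rightarrow> r' | None \<Rightarrow> r @ [a])"

definition NF :: "('a \<Rightarrow> 'a \<Rightarrow> bool) \<Rightarrow> 'a letter list \<Rightarrow> 'a letter list" where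
  "NF E w = foldl (red E) [] w"

fun nopat :: "'a \<Rightarrow> 'a letter list \<Rightarrow> bool" where
  "nopat x (l1 # l2 # s) = (\<not> (fst l1 = x \<and> l2 = inv_letter l1) \<and> nopat x (l2 # s))"
| "nopat x _ = True"

definition pf :: "('a \<Rightarrow> 'a \<Rightarrow> bool) \<Rightarrow> 'a letter list \<Rightarrow> bool" where
  "pf E r = (\<forall>x. nopat x (sig E x r))"

definition canc :: "('a \<Rightarrow> 'a \<Rightarrow> bool) \<Rightarrow> 'a letter list \<Rightarrow> 'a letter \<Rightarrow> bool" where
  "canc E r a = (\<exists>xs ys. r = xs @ inv_letter a # ys \<and> (\<forall>m\<in>set ys. E (fst a) (fst m)))"

lemma proj_append[simp]: "proj x y (a @ b) = proj x y a @ proj x y b"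
  by (simp add: proj_def)
lemma proj_Cons: "proj x y (l # b) = (if fst l = x \<or> fst l = y then l # proj x y b else proj x y b)"
  by (simp add: proj_def)
lemma proj_Nil[simp]: "proj x y [] = []" by (simp add: proj_def)
lemma sig_append[simp]: "sig E x (a @ b) = sig E x a @ sig E x b"
  by (simp add: sig_def)
lemma sig_Cons: "sig E x (l # b) = (if \<not> E x (fst l) then l # sig E x b else sig E x b)"
  by (simp add: sig_def)
lemma sig_Nil[simp]: "sig E x [] = []" by (simp add: sig_def)

lemma teq_refl[simp]: "teq E w w" by (simp add: teq_def)
lemma teq_sym: "teq E a b \<Longrightarrow> teq E b a" by (simp add: teq_def)
lemma teq_trans: "teq E a b \<Longrightarrow> teq E b c \<Longrightarrow> teq E a c" by (simp add: teq_def)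

lemma cl_Some: "cl E a r = Some r' \<Longrightarrow>
   \<exists>xs ys. r = xs @ inv_letter a # ys \<and> r' = xs @ ys \<and> (\<forall>m\<in>set ys. E (fst a) (fst m))"
proof (induct r arbitrary: r')
  case Nil then show ?case by simp
next
  case (Cons l r)
  show ?case
  proof (cases "cl E a r")
    case None
    then show ?thesis using Cons(2) by (auto split: if_splits intro: exI[of _ "[]"])
  next
    case (Some r1)
    then obtain xs ys where "r = xs @ inv_letter a # ys" "r1 = xs @ ys" "\<forall>m\<in>set ys. E (fst a) (fst m)"
      using Cons(1) by blast
    moreover have "r' = l # r1" using Cons(2) Some by simp
    ultimately show ?thesis by (intro exI[of _ "l # xs"] exI[of _ ys]) simp
  qed
qed

lemma cl_None: "cl E a r = None \<Longrightarrow> r = xs @ inv_letter a # ys \<Longrightarrow> \<exists>m\<in>set ys. \<not> E (fst a) (fst m)"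
proof (induct r arbitrary: xs)
  case Nil then show ?case by simp
next
  case (Cons l r)
  show ?case
  proof (cases xs)
    case Nil
    then show ?thesis using Cons(2,3) by (auto split: option.splits if_splits)
  next
    case (Cons l' xs')
    then show ?thesis using Cons.hyps Cons.prems by (auto split: option.splits if_splits)
  qed
qed

lemma cl_None_iff: "cl E a r = None \<longleftrightarrow> \<not> canc E r a"
  unfolding canc_def using cl_None cl_Some by (metis option.exhaust)

lemma red_canc: "canc E r a \<Longrightarrow> \<exists>xs ys. r = xs @ inv_letter a # ys \<and> red E r a = xs @ ys \<and> (\<forall>m\<in>set ys. E (fst a) (fst m))"
  using cl_None_iff[of E a r] cl_Some[of E a r] unfolding red_def by (auto split: option.splits)

lemma red_nocanc: "\<not> canc E r a \<Longrightarrow> red E r a = r @ [a]"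
  using cl_None_iff[of E a r] unfolding red_def by auto

lemma filter_eq_snoc: "filter P r = s @ [l] \<Longrightarrow> \<exists>xs ys. r = xs @ l # ys \<and> P l \<and> filter P ys = []"
proof -
  assume h: "filter P r = s @ [l]"
  then have "filter P (rev r) = l # rev s" by (simp add: rev_filter[symmetric])
  then obtain us vs where "rev r = us @ l # vs" "\<forall>u\<in>set us. \<not> P u" "P l"
    by (auto simp: filter_eq_Cons_iff)
  then have "r = rev vs @ l # rev us" "filter P (rev us) = []"
    by (auto simp: filter_empty_conv) (metis rev_append rev_rev_ident rev.simps(2) append_assoc append_Cons append_Nil)
  then show ?thesis using \<open>P l\<close> by blast
qed

lemma nopat_append: "nopat x (s @ t) \<longleftrightarrow> nopat x s \<and> nopat x t \<and>
   \<not> (s \<noteq> [] \<and> t \<noteq> [] \<and> fst (last s) = x \<and> hd t = inv_letter (last s))"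
proof (induct s)
  case Nil then show ?case by simp
next
  case (Cons l s) then show ?case by (cases s; cases t) auto
qed

lemma nopat_mid: "nopat x (A @ c # B) \<Longrightarrow> nopat x A \<and> nopat x B"
proof -
  assume h: "nopat x (A @ c # B)"
  then have "nopat x A" "nopat x ([c] @ B)" using nopat_append[of x A "c # B"] by auto
  then show ?thesis using nopat_append[of x "[c]" B] by auto
qed

context pcg
begin

lemma proj_nil_comm: "\<forall>m\<in>set ys. E x (fst m) \<Longrightarrow> \<not> E p q \<Longrightarrow> x = p \<or> x = q \<Longrightarrow> proj p q ys = []"
  unfolding proj_def filter_empty_conv
proof (intro ballI notI)
  fix m assume h: "\<forall>m\<in>set ys. E x (fst m)" "\<not> E p q" "x = p \<or> x = q" "m \<in> set ys" "fst m = p \<or> fst m = q"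
  then have "E x (fst m)" by blast
  then show False using h(2,3,5) Esym by auto
qed

lemma canc_proj: "canc E r a \<longleftrightarrow> (\<forall>y. \<not> E (fst a) y \<longrightarrow> proj (fst a) y r \<noteq> [] \<and> last (proj (fst a) y r) = inv_letter a)"
proof
  assume "canc E r a"
  then obtain xs ys where r: "r = xs @ inv_letter a # ys" and ys: "\<forall>m\<in>set ys. E (fst a) (fst m)"
    unfolding canc_def by blast
  show "\<forall>y. \<not> E (fst a) y \<longrightarrow> proj (fst a) y r \<noteq> [] \<and> last (proj (fst a) y r) = inv_letter a"
  proof (intro allI impI)
    fix y assume y: "\<not> E (fst a) y"
    have "proj (fst a) y ys = []" unfolding proj_def using ys y
      by (auto simp: filter_empty_conv)
    then show "proj (fst a) y r \<noteq> [] \<and> last (proj (fst a) y r) = inv_letter a"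
      using r by (simp add: proj_Cons)
  qed
next
  assume h: "\<forall>y. \<not> E (fst a) y \<longrightarrow> proj (fst a) y r \<noteq> [] \<and> last (proj (fst a) y r) = inv_letter a"
  let ?x = "fst a"
  have "proj ?x ?x r \<noteq> []" "last (proj ?x ?x r) = inv_letter a" using h by auto
  then have "proj ?x ?x r = butlast (proj ?x ?x r) @ [inv_letter a]"
    by (metis append_butlast_last_id)
  then obtain xs ys where r: "r = xs @ inv_letter a # ys" and ys0: "proj ?x ?x ys = []"
    unfolding proj_def using filter_eq_snoc by (metis (no_types, lifting))
  have "\<forall>m\<in>set ys. E ?x (fst m)"
  proof
    fix m assume m: "m \<in> set ys"
    show "E ?x (fst m)"
    proof (rule ccontr)
      assume ne: "\<not> E ?x (fst m)"
      have mx: "fst m \<noteq> ?x" using ys0 m unfolding proj_def by (auto simp: filter_empty_conv)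
      have pne: "proj ?x (fst m) ys \<noteq> []" using m unfolding proj_def by (auto simp: filter_empty_conv)
      have "last (proj ?x (fst m) r) = last (proj ?x (fst m) ys)" using r pne by (simp add: proj_Cons last_append)
      moreover have L: "last (proj ?x (fst m) ys) \<in> set (proj ?x (fst m) ys)" using pne by (rule last_in_set)
      then have "last (proj ?x (fst m) ys) \<in> set ys" "fst (last (proj ?x (fst m) ys)) = ?x \<or> fst (last (proj ?x (fst m) ys)) = fst m"
        unfolding proj_def by auto
      moreover have "\<forall>l\<in>set ys. fst l \<noteq> ?x" using ys0 unfolding proj_def by (auto simp: filter_empty_conv)
      ultimately show False using h ne mx by (metis fst_inv_letter)
    qed
  qed
  then show "canc E r a" unfolding canc_def using r by blast
qed

lemma canc_sig: "sig E (fst a) r \<noteq> [] \<Longrightarrow> last (sig E (fst a) r) = inv_letter a \<Longrightarrow> canc E r a"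
proof -
  assume "sig E (fst a) r \<noteq> []" "last (sig E (fst a) r) = inv_letter a"
  then have "sig E (fst a) r = butlast (sig E (fst a) r) @ [inv_letter a]" by (metis append_butlast_last_id)
  then obtain xs ys where "r = xs @ inv_letter a # ys" "filter (\<lambda>l. \<not> E (fst a) (fst l)) ys = []"
    unfolding sig_def using filter_eq_snoc by (metis (no_types, lifting))
  then show ?thesis unfolding canc_def by (auto simp: filter_empty_conv)
qed

lemma proj_red: "\<not> E p q \<Longrightarrow> proj p q (red E r a) =
  (if canc E r a then (if fst a = p \<or> fst a = q then butlast (proj p q r) else proj p q r)
   else proj p q r @ (if fst a = p \<or> fst a = q then [a] else []))"
proof (cases "canc E r a")
  case True
  assume pq: "\<not> E p q"
  obtain xs ys where r: "r = xs @ inv_letter a # ys" and rr: "red E r a = xs @ ys"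
     and ys: "\<forall>m\<in>set ys. E (fst a) (fst m)" using red_canc[OF True] by blast
  show ?thesis
  proof (cases "fst a = p \<or> fst a = q")
    case True
    have "proj p q ys = []" using ys pq True by (intro proj_nil_comm[of _ "fst a"]) auto
    then show ?thesis using True \<open>canc E r a\<close> r rr by (auto simp: proj_Cons)
  next
    case False
    then show ?thesis using \<open>canc E r a\<close> r rr by (auto simp: proj_Cons)
  qed
next
  case False
  then show ?thesis by (simp add: red_nocanc proj_Cons proj_def)
qed

lemma teq_canc: "teq E r r' \<Longrightarrow> canc E r a = canc E r' a"
  unfolding canc_proj teq_def by auto

lemma teq_red: "teq E r r' \<Longrightarrow> teq E (red E r a) (red E r' a)"
  using teq_canc[of r r' a] unfolding teq_def by (simp add: proj_red)

lemma teq_foldl: "teq E r r' \<Longrightarrow> teq E (foldl (red E) r w) (foldl (red E) r' w)"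
  by (induct w arbitrary: r r') (auto simp: teq_red)

lemma canc_red_other: "E (fst a) (fst b) \<Longrightarrow> canc E (red E r a) b = canc E r b"
  unfolding canc_proj using Esym by (auto simp: proj_red)

lemma red_comm: "E (fst a) (fst b) \<Longrightarrow> teq E (red E (red E r a) b) (red E (red E r b) a)"
proof -
  assume ab: "E (fst a) (fst b)"
  then have ba: "E (fst b) (fst a)" by (rule Esym)
  show ?thesis unfolding teq_def
  proof (intro allI impI)
    fix p q assume pq: "\<not> E p q"
    then have "\<not> ((fst a = p \<or> fst a = q) \<and> (fst b = p \<or> fst b = q))" using ab ba Esym by auto
    then show "proj p q (red E (red E r a) b) = proj p q (red E (red E r b) a)"
      using pq canc_red_other[OF ab, of r] canc_red_other[OF ba, of r]
      by (auto simp: proj_red)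
  qed
qed

lemma canc_snoc: "canc E (r @ [inv_letter a]) a"
  unfolding canc_def by (rule exI[of _ r], rule exI[of _ "[]"]) simp

lemma red_inv: "pf E r \<Longrightarrow> teq E (red E (red E r a) (inv_letter a)) r"
proof (cases "canc E r a")
  case False
  then have "red E r a = r @ [a]" by (rule red_nocanc)
  moreover have c: "canc E (r @ [a]) (inv_letter a)" using canc_snoc[of r "inv_letter a"] by simp
  ultimately show ?thesis unfolding teq_def
  proof (intro allI impI)
    fix p q assume pq: "\<not> E p q"
    show "proj p q (red E (red E r a) (inv_letter a)) = proj p q r"
      using \<open>red E r a = r @ [a]\<close> c by (simp add: proj_red[OF pq] proj_Cons)
  qed
next
  case True
  assume pfr: "pf E r"
  obtain xs ys where r: "r = xs @ inv_letter a # ys" and rr: "red E r a = xs @ ys"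
     and ys: "\<forall>m\<in>set ys. E (fst a) (fst m)" using red_canc[OF True] by blast
  have sys: "sig E (fst a) ys = []" using ys unfolding sig_def by (auto simp: filter_empty_conv)
  have nc: "\<not> canc E (xs @ ys) (inv_letter a)"
  proof
    assume "canc E (xs @ ys) (inv_letter a)"
    then obtain xs' ys' where e: "xs @ ys = xs' @ a # ys'" and ys': "\<forall>m\<in>set ys'. E (fst a) (fst m)"
      unfolding canc_def by auto
    have "sig E (fst a) ys' = []" using ys' unfolding sig_def by (auto simp: filter_empty_conv)
    then have "sig E (fst a) xs = sig E (fst a) xs' @ [a]"
      using arg_cong[OF e, of "sig E (fst a)"] sys by (simp add: sig_Cons)
    then have "sig E (fst a) r = sig E (fst a) xs' @ [a, inv_letter a]"
      using r sys by (simp add: sig_Cons)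
    then have "\<not> nopat (fst a) (sig E (fst a) r)" by (simp add: nopat_append)
    then show False using pfr unfolding pf_def by blast
  qed
  then have "red E (red E r a) (inv_letter a) = xs @ ys @ [inv_letter a]"
    using rr red_nocanc[OF nc] by simp
  moreover have "teq E (xs @ ys @ [inv_letter a]) r"
    unfolding teq_def
  proof (intro allI impI)
    fix p q assume pq: "\<not> E p q"
    show "proj p q (xs @ ys @ [inv_letter a]) = proj p q r"
    proof (cases "fst a = p \<or> fst a = q")
      case True
      have "proj p q ys = []" using ys pq True by (intro proj_nil_comm[of _ "fst a"]) auto
      then show ?thesis using r True by (auto simp: proj_Cons)
    next
      case False then show ?thesis using r by (auto simp: proj_Cons)
    qed
  qed
  ultimately show ?thesis by simp
qed

lemma pf_Nil[simp]: "pf E []" by (simp add: pf_def)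

lemma pf_red: "pf E r \<Longrightarrow> pf E (red E r a)"
proof (cases "canc E r a")
  case True
  assume pfr: "pf E r"
  obtain xs ys where r: "r = xs @ inv_letter a # ys" and rr: "red E r a = xs @ ys"
     and ys: "\<forall>m\<in>set ys. E (fst a) (fst m)" using red_canc[OF True] by blast
  show ?thesis unfolding pf_def rr
  proof
    fix x
    have n: "nopat x (sig E x r)" using pfr unfolding pf_def by blast
    show "nopat x (sig E x (xs @ ys))"
    proof (cases "E x (fst a)")
      case True
      then show ?thesis using n r by (simp add: sig_Cons)
    next
      case False
      show ?thesis
      proof (cases "x = fst a")
        case True
        have "sig E x ys = []" using ys True unfolding sig_def by (auto simp: filter_empty_conv)
        then show ?thesis using n r True by (simp add: sig_Cons nopat_append)
      next
        case xa: False
        have nx: "\<forall>m\<in>set (sig E x ys). fst m \<noteq> x"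
        proof
          fix m assume "m \<in> set (sig E x ys)"
          then have "E (fst a) (fst m)" using ys unfolding sig_def by auto
          then show "fst m \<noteq> x" using False Esym by blast
        qed
        have "sig E x r = sig E x xs @ [inv_letter a] @ sig E x ys" using r False by (simp add: sig_Cons)
        then have n1: "nopat x (sig E x xs)" "nopat x (sig E x ys)"
          using n nopat_mid[of x "sig E x xs" "inv_letter a" "sig E x ys"] by simp_all
        have "\<not> (sig E x ys \<noteq> [] \<and> hd (sig E x ys) = inv_letter (last (sig E x xs)) \<and> fst (last (sig E x xs)) = x)"
        proof
          assume h: "sig E x ys \<noteq> [] \<and> hd (sig E x ys) = inv_letter (last (sig E x xs)) \<and> fst (last (sig E x xs)) = x"
          then have "hd (sig E x ys) \<in> set (sig E x ys)" using hd_in_set by blast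
          then have "fst (hd (sig E x ys)) \<noteq> x" using nx by blast
          then show False using h by simp
        qed
        then show ?thesis using n1 by (auto simp: nopat_append)
      qed
    qed
  qed
next
  case False
  assume pfr: "pf E r"
  show ?thesis unfolding pf_def red_nocanc[OF False]
  proof
    fix x
    have n: "nopat x (sig E x r)" using pfr unfolding pf_def by blast
    show "nopat x (sig E x (r @ [a]))"
    proof (cases "E x (fst a)")
      case True then show ?thesis using n by (simp add: sig_Cons)
    next
      case ne: False
      have "\<not> (sig E x r \<noteq> [] \<and> fst (last (sig E x r)) = x \<and> a = inv_letter (last (sig E x r)))"
      proof
        assume h: "sig E x r \<noteq> [] \<and> fst (last (sig E x r)) = x \<and> a = inv_letter (last (sig E x r))"
        then have "x = fst a" by simp
        then have "canc E r a" using h canc_sig by (metis inv_letter_inv)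
        then show False using False by simp
      qed
      then show ?thesis using n ne by (simp add: sig_Cons nopat_append)
    qed
  qed
qed

lemma pf_foldl: "pf E r \<Longrightarrow> pf E (foldl (red E) r w)"
  by (induct w arbitrary: r) (auto simp: pf_red)

lemma pf_NF: "pf E (NF E w)"
  unfolding NF_def by (rule pf_foldl) simp

lemma red_eq: "pc_eq E (r @ [a]) (red E r a)"
proof (cases "canc E r a")
  case True
  obtain xs ys where r: "r = xs @ inv_letter a # ys" and rr: "red E r a = xs @ ys"
     and ys: "\<forall>m\<in>set ys. E (fst a) (fst m)" using red_canc[OF True] by blast
  have "pc_eq E (r @ [a]) (xs @ (inv_letter a # ys) @ [a])" using r by simp
  also have "pc_eq E \<dots> (xs @ (ys @ [inv_letter a]) @ [a])"
    using move_right[of ys "inv_letter a"] ys by (intro pc_eq_appL pc_eq_appR) simp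
  also have "pc_eq E \<dots> (xs @ ys @ [])"
    using pc_eq_ctx[OF pc_eq_cancel2[of E "inv_letter a"], of "xs @ ys" "[]"] by simp
  finally show ?thesis using rr by simp
next
  case False then show ?thesis by (simp add: red_nocanc)
qed

lemma foldl_eq: "pc_eq E (r @ w) (foldl (red E) r w)"
proof (induct w arbitrary: r)
  case Nil then show ?case by simp
next
  case (Cons a w)
  have "pc_eq E (r @ a # w) (red E r a @ w)" using pc_eq_appR[OF red_eq[of r a], of w] by simp
  then show ?case using Cons[of "red E r a"] pc_eq_trans by simp
qed

lemma NF_eq: "pc_eq E w (NF E w)"
  using foldl_eq[of "[]" w] unfolding NF_def by simp

lemma NF_step: "pc_step E w w' \<Longrightarrow> teq E (NF E w) (NF E w')"
proof (induct rule: pc_step.cases)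
  case (cancel xs x b ys)
  have i: "(x, \<not> b) = inv_letter (x, b)" by (simp add: inv_letter_def)
  have "teq E (red E (red E (NF E xs) (x, b)) (x, \<not> b)) (NF E xs)"
    unfolding i by (rule red_inv[OF pf_NF])
  then show ?case using cancel by (simp add: NF_def teq_foldl)
next
  case (commute x y xs b c ys)
  have "teq E (red E (red E (NF E xs) (x, b)) (y, c)) (red E (red E (NF E xs) (y, c)) (x, b))"
    using red_comm[of "(x,b)" "(y,c)"] commute by simp
  then show ?case using commute by (simp add: NF_def teq_foldl)
qed

lemma NF_teq: "pc_eq E w w' \<Longrightarrow> teq E (NF E w) (NF E w')"
  unfolding pc_eq_def
proof (induct rule: rtranclp_induct)
  case base then show ?case by simp
next
  case (step y z)
  then show ?case using NF_step teq_sym teq_trans by blast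
qed

lemma length_red: "length (red E r a) = (if canc E r a then length r - 1 else length r + 1)"
proof (cases "canc E r a")
  case True then show ?thesis using red_canc[OF True] by auto
qed (simp add: red_nocanc)

lemma foldl_len: "length (foldl (red E) r w) \<le> length r + length w \<and>
   (length (foldl (red E) r w) = length r + length w \<longrightarrow> foldl (red E) r w = r @ w)"
proof (induct w arbitrary: r)
  case Nil then show ?case by simp
next
  case (Cons a w)
  show ?case
  proof (cases "canc E r a")
    case True
    then have "length (red E r a) = length r - 1" "length r > 0"
      using red_canc[OF True] length_red by auto
    then show ?thesis using Cons[of "red E r a"] by auto
  next
    case False
    then show ?thesis using Cons[of "r @ [a]"] by (simp add: red_nocanc)
  qed
qed

lemma NF_len: "length (NF E w) \<le> length w"
  using foldl_len[of "[]" w] unfolding NF_def by simp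

lemma NF_len_eq: "length (NF E w) = length w \<Longrightarrow> NF E w = w"
  using foldl_len[of "[]" w] unfolding NF_def by simp

lemma teq_extract: "teq E (a # s) r' \<Longrightarrow> \<exists>t t'. r' = t @ a # t' \<and> (\<forall>m\<in>set t. E (fst a) (fst m)) \<and> teq E s (t @ t')"
proof -
  assume h: "teq E (a # s) r'"
  let ?x = "fst a"
  have "proj ?x ?x r' = a # proj ?x ?x s" using h unfolding teq_def by (metis Eirr proj_Cons)
  then obtain t t' where r': "r' = t @ a # t'" and tx: "\<forall>u\<in>set t. fst u \<noteq> ?x"
    unfolding proj_def by (auto simp: filter_eq_Cons_iff)
  have tE: "\<forall>m\<in>set t. E ?x (fst m)"
  proof
    fix m assume m: "m \<in> set t"
    show "E ?x (fst m)"
    proof (rule ccontr)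
      assume ne: "\<not> E ?x (fst m)"
      then have "proj ?x (fst m) r' = proj ?x (fst m) (a # s)" using h unfolding teq_def by auto
      then have e: "proj ?x (fst m) t @ a # proj ?x (fst m) t' = a # proj ?x (fst m) s"
        using r' by (simp add: proj_Cons)
      have "proj ?x (fst m) t \<noteq> []" using m unfolding proj_def by (auto simp: filter_empty_conv)
      then have "hd (proj ?x (fst m) t) = a" using e by (metis append_Cons list.sel(1) neq_Nil_conv)
      then have "a \<in> set (proj ?x (fst m) t)" using \<open>proj ?x (fst m) t \<noteq> []\<close> hd_in_set by metis
      then have "a \<in> set t" unfolding proj_def by simp
      then show False using tx by auto
    qed
  qed
  have "teq E s (t @ t')" unfolding teq_def
  proof (intro allI impI)
    fix p q assume pq: "\<not> E p q"
    have e: "proj p q (a # s) = proj p q (t @ a # t')" using h pq r' unfolding teq_def by auto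
    show "proj p q s = proj p q (t @ t')"
    proof (cases "fst a = p \<or> fst a = q")
      case True
      have "proj p q t = []" using tE pq True by (intro proj_nil_comm[of _ "fst a"]) auto
      then show ?thesis using e True by (simp add: proj_Cons)
    next
      case False then show ?thesis using e by (simp add: proj_Cons)
    qed
  qed
  then show ?thesis using r' tE by blast
qed

lemma teq_pc_eq: "teq E r r' \<Longrightarrow> pc_eq E r r'"
proof (induct r arbitrary: r')
  case Nil
  then have "proj x x r' = []" for x unfolding teq_def by (metis Eirr proj_Nil)
  then have "r' = []"
  proof (cases r')
    case (Cons l r0)
    then have "proj (fst l) (fst l) r' \<noteq> []" by (simp add: proj_Cons)
    then show ?thesis using \<open>\<And>x. proj x x r' = []\<close> by blast
  qed simp
  then show ?case by simp
next
  case (Cons a s)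
  obtain t t' where r': "r' = t @ a # t'" and tE: "\<forall>m\<in>set t. E (fst a) (fst m)" and s: "teq E s (t @ t')"
    using teq_extract[OF Cons(2)] by blast
  have "pc_eq E (a # s) (a # t @ t')" using pc_eq_appL[OF Cons(1)[OF s], of "[a]"] by simp
  also have "pc_eq E \<dots> ((t @ [a]) @ t')" using pc_eq_appR[OF move_right[OF tE], of t'] by simp
  finally show ?case using r' by simp
qed

lemma teq_length: "teq E r r' \<Longrightarrow> length r = length r'"
proof (induct r arbitrary: r')
  case Nil
  then have "proj x x r' = []" for x unfolding teq_def by (metis Eirr proj_Nil)
  then have "r' = []"
  proof (cases r')
    case (Cons l r0)
    then have "proj (fst l) (fst l) r' \<noteq> []" by (simp add: proj_Cons)
    then show ?thesis using \<open>\<And>x. proj x x r' = []\<close> by blast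
  qed simp
  then show ?case by simp
next
  case (Cons a s)
  obtain t t' where r': "r' = t @ a # t'" and s: "teq E s (t @ t')"
    using teq_extract[OF Cons(2)] by blast
  then show ?case using Cons(1)[OF s] by simp
qed

lemma teq_fst: "teq E r r' \<Longrightarrow> fst ` set r = fst ` set r'"
proof -
  assume h: "teq E r r'"
  have A: "x \<in> fst ` set r \<longleftrightarrow> proj x x r \<noteq> []" for x r
    unfolding proj_def by (auto simp: filter_empty_conv)
  have B: "proj x x r = proj x x r'" for x using h unfolding teq_def by simp
  show ?thesis
  proof (rule set_eqI)
    fix x show "x \<in> fst ` set r \<longleftrightarrow> x \<in> fst ` set r'" using A[of x r] A[of x r'] B[of x] by simp
  qed
qed

lemma NF_min: "pc_eq E w w' \<Longrightarrow> length (NF E w) \<le> length w'"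
  using NF_teq teq_length NF_len by (metis)

lemma pc_len_NF: "pc_len E w = length (NF E w)"
  unfolding pc_len_def
proof (rule Least_equality)
  show "\<exists>w'. pc_eq E w w' \<and> length w' = length (NF E w)" using NF_eq by blast
next
  fix n assume "\<exists>w'. pc_eq E w w' \<and> length w' = n"
  then show "length (NF E w) \<le> n" using NF_min by blast
qed

lemma pc_len_le: "pc_eq E w w' \<Longrightarrow> pc_len E w \<le> length w'"
  by (simp add: pc_len_NF NF_min)

lemma pc_len_cong: "pc_eq E w w' \<Longrightarrow> pc_len E w = pc_len E w'"
  by (simp add: pc_len_NF NF_teq teq_length)

lemma pc_len_self: "pc_len E w \<le> length w"
  by (simp add: pc_len_NF NF_len)

lemma min_NF: "pc_len E w = length w \<Longrightarrow> NF E w = w"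
  by (simp add: pc_len_NF NF_len_eq)

lemma NF_NF: "NF E (NF E w) = NF E w"
  using NF_eq pc_len_cong min_NF pc_len_NF by metis

lemma red_pc_teq: "pc_len E r = length r \<Longrightarrow> pc_len E r' = length r' \<Longrightarrow> pc_eq E r r' \<Longrightarrow> teq E r r'"
  using min_NF NF_teq by metis

lemma pc_len_inv: "pc_len E (inv_word w) = pc_len E w"
proof -
  have "pc_len E (inv_word w) \<le> pc_len E w" for w
    using pc_len_le[OF pc_eq_inv[OF NF_eq[of w]]] by (simp add: pc_len_NF)
  from this[of w] this[of "inv_word w"] show ?thesis by simp
qed

end

definition restr :: "'a set \<Rightarrow> 'a letter list \<Rightarrow> 'a letter list" where
  "restr Y w = filter (\<lambda>l. fst l \<in> Y) w"

lemma restr_append[simp]: "restr Y (a @ b) = restr Y a @ restr Y b" by (simp add: restr_def)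
lemma restr_inv: "restr Y (inv_word w) = inv_word (restr Y w)"
  by (induct w) (auto simp: restr_def)
lemma restr_id: "fst ` set w \<subseteq> Y \<Longrightarrow> restr Y w = w"
  unfolding restr_def by (induct w) auto
lemma restr_nil: "fst ` set w \<inter> Y = {} \<Longrightarrow> restr Y w = []"
  unfolding restr_def by (induct w) auto
lemma length_restr: "length (restr Y w) \<le> length w" by (simp add: restr_def)
lemma length_restr_eq: "length (restr Y w) = length w \<Longrightarrow> fst ` set w \<subseteq> Y"
  unfolding restr_def by (metis (mono_tags, lifting) filter_id_conv image_subsetI length_filter_less less_irrefl)
lemma fst_restr: "fst ` set (restr Y w) \<subseteq> Y" by (auto simp: restr_def)

lemma word_pow_0[simp]: "word_pow w 0 = []" by (simp add: word_pow_def)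
lemma word_pow_Suc: "word_pow w (Suc n) = w @ word_pow w n" by (simp add: word_pow_def)
lemma word_pow_one[simp]: "word_pow w (Suc 0) = w" by (simp add: word_pow_def)
lemma word_pow_1: "word_pow w 1 = w" by (simp add: word_pow_def)
lemma word_pow_add: "word_pow w (m + n) = word_pow w m @ word_pow w n"
  by (simp add: word_pow_def replicate_add)
lemma word_pow_Suc_right: "word_pow w (Suc n) = word_pow w n @ w"
  using word_pow_add[of w n "Suc 0"] by simp
lemma word_pow_mult: "word_pow w (m * n) = word_pow (word_pow w m) n"
  by (induct n) (simp_all add: word_pow_Suc word_pow_add)
lemma word_pow_Nil[simp]: "word_pow [] n = []" by (simp add: word_pow_def)
lemma inv_word_pow: "inv_word (word_pow w n) = word_pow (inv_word w) n"
proof (induct n)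
  case (Suc n)
  have "inv_word (word_pow w (Suc n)) = inv_word (word_pow w n @ w)" by (simp add: word_pow_Suc_right)
  then show ?case using Suc by (simp add: word_pow_Suc)
qed simp
lemma filter_word_pow: "filter P (word_pow w n) = word_pow (filter P w) n"
  by (induct n) (simp_all add: word_pow_Suc)
lemma proj_word_pow: "proj x y (word_pow w n) = word_pow (proj x y w) n"
  by (simp add: proj_def filter_word_pow)
lemma restr_word_pow: "restr Y (word_pow w n) = word_pow (restr Y w) n"
  by (simp add: restr_def filter_word_pow)
lemma length_word_pow: "length (word_pow w n) = n * length w"
  by (induct n) (simp_all add: word_pow_Suc)
lemma set_word_pow: "n > 0 \<Longrightarrow> set (word_pow w n) = set w"
proof (induct n)
  case (Suc n) then show ?case by (cases n) (auto simp: word_pow_Suc)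
qed simp
lemma set_word_pow_sub: "set (word_pow w n) \<subseteq> set w"
  by (cases "n = 0") (auto simp: set_word_pow)

lemma pc_eq_pow: "pc_eq E a b \<Longrightarrow> pc_eq E (word_pow a n) (word_pow b n)"
  by (induct n) (simp_all add: word_pow_Suc pc_eq_app)

lemma pow_inv_cancel: "pc_eq E (word_pow s k @ word_pow (inv_word s) k) []"
proof (induct k)
  case (Suc k)
  have "word_pow s (Suc k) @ word_pow (inv_word s) (Suc k) = word_pow s k @ (s @ inv_word s) @ word_pow (inv_word s) k"
    by (simp only: word_pow_Suc_right[of s k] word_pow_Suc[of "inv_word s" k] append_assoc)
  also have "pc_eq E \<dots> (word_pow s k @ [] @ word_pow (inv_word s) k)"
    by (rule pc_eq_ctx, rule pc_eq_inv_right)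
  finally show ?case using Suc pc_eq_trans by simp
qed simp

lemma pc_eq_comm_pow: "pc_eq E (s @ t) (t @ s) \<Longrightarrow> pc_eq E (word_pow s n @ t) (t @ word_pow s n)"
proof (induct n)
  case (Suc n)
  have "pc_eq E (word_pow s (Suc n) @ t) (s @ (word_pow s n @ t))" by (simp add: word_pow_Suc)
  also have "pc_eq E \<dots> (s @ (t @ word_pow s n))" by (rule pc_eq_appL, rule Suc(1)[OF Suc(2)])
  also have "pc_eq E \<dots> ((s @ t) @ word_pow s n)" by simp
  also have "pc_eq E \<dots> ((t @ s) @ word_pow s n)" by (rule pc_eq_appR, rule Suc(2))
  finally show ?case by (simp add: word_pow_Suc)
qed simp

lemma pc_eq_comm_sym: "pc_eq E (s @ t) (t @ s) \<Longrightarrow> pc_eq E (t @ s) (s @ t)"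
  by (rule pc_eq_sym)

lemma pc_eq_comm_inv: "pc_eq E (s @ t) (t @ s) \<Longrightarrow> pc_eq E (s @ inv_word t) (inv_word t @ s)"
proof -
  assume h: "pc_eq E (s @ t) (t @ s)"
  have "pc_eq E (s @ inv_word t) (inv_word t @ t @ s @ inv_word t)"
    using pc_eq_appR[OF pc_eq_sym[OF pc_eq_inv_left[of E t]], of "s @ inv_word t"] by simp
  also have "pc_eq E \<dots> (inv_word t @ (s @ t) @ inv_word t)"
    using pc_eq_ctx[OF pc_eq_sym[OF h], of "inv_word t" "inv_word t"] by simp
  also have "pc_eq E \<dots> (inv_word t @ s @ [])"
    using pc_eq_ctx[OF pc_eq_inv_right[of E t], of "inv_word t @ s" "[]"] by simp
  finally show ?thesis by simp
qed

lemma pc_eq_comm_pow2: "pc_eq E (s @ t) (t @ s) \<Longrightarrow> pc_eq E (word_pow s m @ word_pow t n) (word_pow t n @ word_pow s m)"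
proof -
  assume h: "pc_eq E (s @ t) (t @ s)"
  have "pc_eq E (t @ word_pow s m) (word_pow s m @ t)" using pc_eq_sym[OF pc_eq_comm_pow[OF h]] .
  then have "pc_eq E (word_pow t n @ word_pow s m) (word_pow s m @ word_pow t n)" by (rule pc_eq_comm_pow)
  then show ?thesis by (rule pc_eq_sym)
qed

lemma pc_eq_prod_pow: "pc_eq E (s @ t) (t @ s) \<Longrightarrow> pc_eq E (word_pow (s @ t) n) (word_pow s n @ word_pow t n)"
proof (induct n)
  case (Suc n)
  have "pc_eq E (word_pow (s @ t) (Suc n)) (s @ t @ word_pow s n @ word_pow t n)"
    using pc_eq_appL[OF Suc(1)[OF Suc(2)], of "s @ t"] by (simp add: word_pow_Suc)
  also have "pc_eq E \<dots> (s @ (word_pow s n @ t) @ word_pow t n)"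
    using pc_eq_ctx[OF pc_eq_sym[OF pc_eq_comm_pow[OF Suc(2), of n]], of s "word_pow t n"] by simp
  finally show ?case by (simp add: word_pow_Suc)
qed simp

lemma pc_eq_conj_pow: "pc_eq E (word_pow (inv_word g @ s @ g) n) (inv_word g @ word_pow s n @ g)"
proof (induct n)
  case 0 then show ?case using pc_eq_sym[OF pc_eq_inv_left[of E g]] by simp
next
  case (Suc n)
  have "pc_eq E (word_pow (inv_word g @ s @ g) (Suc n)) ((inv_word g @ s) @ (g @ inv_word g) @ word_pow s n @ g)"
    using pc_eq_appL[OF Suc, of "inv_word g @ s @ g"] by (simp add: word_pow_Suc)
  also have "pc_eq E \<dots> ((inv_word g @ s) @ [] @ word_pow s n @ g)"
    by (rule pc_eq_ctx, rule pc_eq_inv_right)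
  finally show ?case by (simp add: word_pow_Suc)
qed

context pcg
begin

lemma pc_step_restr: "pc_step E a b \<Longrightarrow> restr Y a = restr Y b \<or> pc_step E (restr Y a) (restr Y b)"
proof (induct rule: pc_step.cases)
  case (cancel xs x b ys)
  then show ?case using pc_step.cancel[of E "restr Y xs" x b "restr Y ys"] by (auto simp: restr_def)
next
  case (commute x y xs b c ys)
  then show ?case using pc_step.commute[of E x y "restr Y xs" b c "restr Y ys"] by (auto simp: restr_def)
qed

lemma pc_eq_restr: "pc_eq E a b \<Longrightarrow> pc_eq E (restr Y a) (restr Y b)"
  unfolding pc_eq_def
proof (induct rule: rtranclp_induct)
  case base then show ?case by simp
next
  case (step y z)
  then have "restr Y y = restr Y z \<or> (sup (pc_step E) (pc_step E)\<inverse>\<inverse>) (restr Y y) (restr Y z)"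
  proof -
    have "pc_step E y z \<or> pc_step E z y" using step(2) by auto
    then show ?thesis using pc_step_restr[of y z Y] pc_step_restr[of z y Y] by auto
  qed
  then show ?case using step(3) by (metis rtranclp.rtrancl_into_rtrancl)
qed

lemma indep_comm: "(\<forall>a\<in>set s. \<forall>b\<in>set t. E (fst a) (fst b)) \<Longrightarrow> pc_eq E (s @ t) (t @ s)"
proof -
  assume h: "\<forall>a\<in>set s. \<forall>b\<in>set t. E (fst a) (fst b)"
  have "teq E (s @ t) (t @ s)" unfolding teq_def
  proof (intro allI impI)
    fix p q assume pq: "\<not> E p q"
    have "proj p q s = [] \<or> proj p q t = []"
    proof (rule ccontr)
      assume "\<not> (proj p q s = [] \<or> proj p q t = [])"
      then obtain a b where a: "a \<in> set s" "fst a = p \<or> fst a = q" and b: "b \<in> set t" "fst b = p \<or> fst b = q"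
        unfolding proj_def by (auto simp: filter_empty_conv)
      have "E (fst a) (fst b)" using h a b by blast
      then show False using a(2) b(2) pq Esym by auto
    qed
    then show "proj p q (s @ t) = proj p q (t @ s)" by auto
  qed
  then show ?thesis by (rule teq_pc_eq)
qed

lemma gens_commute_E: "E a b \<Longrightarrow> gens_commute E a b"
  unfolding gens_commute_def using eq_swap[of "(a, False)" "(b, False)" "[]" "[]"] by simp

lemma pf_prefix: "pf E (s @ t) \<Longrightarrow> pf E s"
  unfolding pf_def by (simp add: nopat_append)

lemma pf_NF_fix: "pf E w \<Longrightarrow> NF E w = w"
proof (induct w rule: rev_induct)
  case Nil then show ?case by (simp add: NF_def)
next
  case (snoc a w)
  have pw: "pf E w" using pf_prefix snoc(2) by blast
  have nc: "\<not> canc E w a"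
  proof
    assume "canc E w a"
    then obtain xs ys where w: "w = xs @ inv_letter a # ys" and ys: "\<forall>m\<in>set ys. E (fst a) (fst m)"
      unfolding canc_def by blast
    have "sig E (fst a) ys = []" using ys unfolding sig_def by (auto simp: filter_empty_conv)
    then have "sig E (fst a) (w @ [a]) = sig E (fst a) xs @ [inv_letter a, a]"
      using w by (simp add: sig_Cons)
    then have "\<not> nopat (fst a) (sig E (fst a) (w @ [a]))"
      using nopat_append[of "fst a" "sig E (fst a) xs" "[inv_letter a, a]"] by simp
    then show False using snoc(2) unfolding pf_def by blast
  qed
  have "NF E (w @ [a]) = red E (NF E w) a" by (simp add: NF_def)
  then show ?case using snoc(1)[OF pw] red_nocanc[OF nc] by simp
qed

lemma pf_pc_len: "pf E w \<Longrightarrow> pc_len E w = length w"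
  using pf_NF_fix pc_len_NF by metis

lemma nopat_pow: "nopat x s \<Longrightarrow> \<not> (s \<noteq> [] \<and> fst (last s) = x \<and> hd s = inv_letter (last s)) \<Longrightarrow> nopat x (word_pow s n)"
proof (induct n)
  case (Suc n)
  have "word_pow s (Suc n) = s @ word_pow s n" by (simp add: word_pow_Suc)
  moreover have "word_pow s n \<noteq> [] \<Longrightarrow> hd (word_pow s n) = hd s"
    by (cases n) (auto simp: word_pow_Suc)
  ultimately show ?case using Suc by (auto simp: nopat_append)
qed simp

lemma sig_word_pow: "sig E x (word_pow w n) = word_pow (sig E x w) n"
  by (simp add: sig_def filter_word_pow)

lemma pc_len_le_len: "pc_eq E w w' \<Longrightarrow> pc_len E w \<le> length w'" by (rule pc_len_le)

lemma cyc_boundary: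
  assumes cm: "cyc_minimal E v" and v0: "v0 = NF E v"
  shows "\<not> (sig E x v0 \<noteq> [] \<and> fst (last (sig E x v0)) = x \<and> hd (sig E x v0) = inv_letter (last (sig E x v0)))"
proof
  assume h: "sig E x v0 \<noteq> [] \<and> fst (last (sig E x v0)) = x \<and> hd (sig E x v0) = inv_letter (last (sig E x v0))"
  define c where "c = last (sig E x v0)"
  have fc: "fst c = x" using h c_def by simp
  have lc0: "last (sig E x v0) = c" using c_def by simp
  have hc: "hd (sig E x v0) = inv_letter c" using h c_def by simp
  have "hd (sig E x v0) # tl (sig E x v0) = sig E x v0" using h by (intro list.collapse) simp
  then have "sig E x v0 = inv_letter c # tl (sig E x v0)" unfolding hc by simp
  then have fv: "filter (\<lambda>l. \<not> E x (fst l)) v0 = inv_letter c # tl (sig E x v0)" unfolding sig_def .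
  obtain xs' ys' where v0s: "v0 = xs' @ inv_letter c # ys'" and xs': "\<forall>u\<in>set xs'. \<not> \<not> E x (fst u)"
    using filter_eq_Cons_iff[of "\<lambda>l. \<not> E x (fst l)" v0 "inv_letter c" "tl (sig E x v0)", THEN iffD1, OF fv]
    by (elim exE conjE) simp
  have e1: "pc_eq E v0 (inv_letter c # xs' @ ys')"
  proof -
    have "pc_eq E (xs' @ [inv_letter c]) (inv_letter c # xs')"
      using move_right[of xs' "inv_letter c"] xs' fc by (rule_tac pc_eq_sym) simp
    then have "pc_eq E ((xs' @ [inv_letter c]) @ ys') ((inv_letter c # xs') @ ys')" by (rule pc_eq_appR)
    then show ?thesis unfolding v0s by simp
  qed
  have sxs: "sig E x xs' = []" using xs' unfolding sig_def by (auto simp: filter_empty_conv)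
  have "sig E x v0 = inv_letter c # sig E x ys'" using v0s sxs fc by (simp add: sig_Cons)
  note sv = this
  have S: "sig E x ys' \<noteq> []"
  proof
    assume "sig E x ys' = []"
    then have "c = inv_letter c" using lc0 sv by simp
    then show False by simp
  qed
  have lc: "last (sig E x ys') = c" using lc0 sv S by simp
  have "filter (\<lambda>l. \<not> E x (fst l)) (xs' @ ys') = butlast (sig E x ys') @ [c]"
    using append_butlast_last_id[OF S] sxs lc unfolding sig_def by simp
  then obtain t1 t2 where t: "xs' @ ys' = t1 @ c # t2" and t2: "filter (\<lambda>l. \<not> E x (fst l)) t2 = []"
    using filter_eq_snoc[of "\<lambda>l. \<not> E x (fst l)" "xs' @ ys'" "butlast (sig E x ys')" c] by blast
  have t2E: "\<forall>m\<in>set t2. E (fst c) (fst m)" using t2 fc by (auto simp: filter_empty_conv)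
  have e2: "pc_eq E (xs' @ ys') (t1 @ t2 @ [c])"
    using t pc_eq_appL[OF move_right[OF t2E], of t1] by simp
  have "pc_eq E v (inv_letter c # t1 @ t2 @ [c])"
  proof -
    have "pc_eq E v v0" using NF_eq[of v] v0 by simp
    also have "pc_eq E v0 (inv_letter c # xs' @ ys')" by (rule e1)
    also have "pc_eq E (inv_letter c # xs' @ ys') (inv_letter c # t1 @ t2 @ [c])"
      using pc_eq_appL[OF e2, of "[inv_letter c]"] by simp
    finally show ?thesis .
  qed
  then have "pc_eq E ([c] @ v @ [inv_letter c]) ([c] @ (inv_letter c # t1 @ t2 @ [c]) @ [inv_letter c])"
    by (rule pc_eq_ctx)
  also have "pc_eq E ([c] @ (inv_letter c # t1 @ t2 @ [c]) @ [inv_letter c]) ([] @ [c, inv_letter c] @ (t1 @ t2 @ [c, inv_letter c]))"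
    by simp
  also have "pc_eq E \<dots> ([] @ [] @ (t1 @ t2 @ [c, inv_letter c]))"
    by (rule pc_eq_ctx, rule pc_eq_cancel2)
  also have "pc_eq E \<dots> ((t1 @ t2) @ [] @ [])"
    using pc_eq_ctx[OF pc_eq_cancel2[of E c], of "t1 @ t2" "[]"] by simp
  finally have "pc_eq E ([c] @ v @ [inv_letter c]) (t1 @ t2)" by simp
  then have "pc_len E ([c] @ v @ [inv_letter c]) \<le> length (t1 @ t2)" by (rule pc_len_le)
  moreover have "length (t1 @ t2) + 2 = length v0"
  proof -
    have "length (xs' @ ys') = length (t1 @ t2) + 1" using t by simp
    then show ?thesis using v0s by simp
  qed
  moreover have "pc_len E v = length v0" using v0 pc_len_NF by simp
  moreover have "pc_len E v \<le> pc_len E (inv_word [inv_letter c] @ v @ [inv_letter c])"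
    using cm unfolding cyc_minimal_def by blast
  ultimately show False by simp
qed

lemma cyc_pow_pf:
  assumes cm: "cyc_minimal E v"
  shows "pf E (word_pow (NF E v) n)"
  unfolding pf_def sig_word_pow
proof
  fix x
  have np: "nopat x (sig E x (NF E v))" using pf_NF unfolding pf_def by blast
  show "nopat x (word_pow (sig E x (NF E v)) n)"
    by (rule nopat_pow[OF np cyc_boundary[OF cm refl, of x]])
qed

lemma cyc_pow_len:
  assumes cm: "cyc_minimal E v"
  shows "pc_len E (word_pow (NF E v) n) = n * length (NF E v)"
  using pf_pc_len[OF cyc_pow_pf[OF cm]] by (simp add: length_word_pow)

end

definition cnt :: "'a \<Rightarrow> 'a letter list \<Rightarrow> nat" where
  "cnt a s = length (filter (\<lambda>l. fst l = a) s)"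

lemma cnt_proj1: "cnt a (proj a b s) = cnt a s"
  unfolding cnt_def proj_def by (simp add: filter_filter) (metis (mono_tags, lifting) filter_cong)
lemma cnt_proj2: "cnt b (proj a b s) = cnt b s"
  unfolding cnt_def proj_def by (simp add: filter_filter) (metis (mono_tags, lifting) filter_cong)
lemma cnt_pow: "cnt a (word_pow s m) = m * cnt a s"
  unfolding cnt_def by (simp add: filter_word_pow length_word_pow)
lemma cnt_pos: "a \<in> fst ` set s \<Longrightarrow> cnt a s > 0"
  unfolding cnt_def by (auto simp: filter_empty_conv)

lemma filter_split_all: "(\<forall>l\<in>set R. P l \<longrightarrow> Q l) \<Longrightarrow>
   filter P R = filter P (filter Q R) @ filter P (filter (\<lambda>l. \<not> Q l) R)"
proof -
  assume h: "\<forall>l\<in>set R. P l \<longrightarrow> Q l"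
  have "filter P (filter Q R) = filter P R"
    unfolding filter_filter using h by (intro filter_cong) auto
  moreover have "filter P (filter (\<lambda>l. \<not> Q l) R) = []"
    unfolding filter_filter using h by (auto simp: filter_empty_conv)
  ultimately show ?thesis by simp
qed

lemma filter_split_none: "(\<forall>l\<in>set R. P l \<longrightarrow> \<not> Q l) \<Longrightarrow>
   filter P R = filter P (filter Q R) @ filter P (filter (\<lambda>l. \<not> Q l) R)"
proof -
  assume h: "\<forall>l\<in>set R. P l \<longrightarrow> \<not> Q l"
  have "filter P (filter (\<lambda>l. \<not> Q l) R) = filter P R"
    unfolding filter_filter using h by (intro filter_cong) auto
  moreover have "filter P (filter Q R) = []"
    unfolding filter_filter using h by (auto simp: filter_empty_conv)
  ultimately show ?thesis by simp
qed

context pcg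
begin

lemma pc_minimal_iff: "pc_minimal E w \<longleftrightarrow> pc_len E w = length w"
proof
  assume "pc_minimal E w"
  then have "length w \<le> length (NF E w)" using NF_eq unfolding pc_minimal_def by blast
  then show "pc_len E w = length w" using pc_len_NF NF_len by (metis le_antisym)
next
  assume "pc_len E w = length w"
  then show "pc_minimal E w" unfolding pc_minimal_def using pc_len_le by metis
qed

lemma pc_alpha_NF: "pc_alpha E v = fst ` set (NF E v)"
  unfolding pc_alpha_def
proof (rule someI2[where a = "NF E v"])
  show "pc_eq E v (NF E v) \<and> pc_minimal E (NF E v)"
    using NF_eq pc_minimal_iff pc_len_NF NF_NF by metis
next
  fix x assume h: "pc_eq E v x \<and> pc_minimal E x"
  then have nx: "NF E x = x" using pc_minimal_iff min_NF by blast
  have "teq E (NF E x) (NF E v)" using h pc_eq_sym NF_teq by blast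
  then show "fst ` set x = fst ` set (NF E v)" using nx teq_fst by metis
qed

lemma pc_eq_nil_len: "pc_len E g = 0 \<Longrightarrow> pc_eq E g []"
  using NF_eq pc_len_NF by (metis length_0_conv)

lemma root_nonnil: "root_element E v \<Longrightarrow> \<not> pc_eq E v []"
  unfolding root_element_def by (metis word_pow_Nil order_refl numeral_le_iff semiring_norm(69) one_le_numeral)

lemma centr_pre:
  assumes cm: "cyc_minimal E v" and wc: "pc_eq E (w @ v) (v @ w)"
  shows "\<exists>R n. pc_eq E (w @ word_pow (NF E v) n) R \<and> teq E (R @ NF E v) (NF E v @ R)"
proof -
  define q where "q = NF E v"
  have vq: "pc_eq E v q" using NF_eq q_def by simp
  have wq: "pc_eq E (w @ q) (q @ w)"
  proof -
    have "pc_eq E (w @ q) (w @ v)" using pc_eq_appL[OF pc_eq_sym[OF vq]] .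
    also have "pc_eq E \<dots> (v @ w)" by (rule wc)
    also have "pc_eq E \<dots> (q @ w)" by (rule pc_eq_appR[OF vq])
    finally show ?thesis .
  qed
  define f where "f n = length (NF E (w @ word_pow q n))" for n
  have fa: "n * length q \<le> length w + f n" for n
  proof -
    have "pc_eq E (word_pow q n) ((inv_word w @ w) @ word_pow q n)"
      using pc_eq_appR[OF pc_eq_sym[OF pc_eq_inv_left[of E w]], of "word_pow q n"] by simp
    also have "pc_eq E \<dots> (inv_word w @ NF E (w @ word_pow q n))"
      using pc_eq_appL[OF NF_eq[of "w @ word_pow q n"], of "inv_word w"] by simp
    finally have "pc_len E (word_pow q n) \<le> length (inv_word w @ NF E (w @ word_pow q n))"
      by (rule pc_len_le)
    moreover have "pc_len E (word_pow q n) = n * length q" using cyc_pow_len[OF cm] q_def by simp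
    ultimately show ?thesis unfolding f_def by simp
  qed
  have fb: "f (Suc n) = pc_len E (NF E (w @ word_pow q n) @ q)
     \<and> pc_eq E (NF E (w @ word_pow q n) @ q) (q @ NF E (w @ word_pow q n))
     \<and> pc_len E (q @ NF E (w @ word_pow q n)) = f (Suc n)" for n
  proof -
    define R where "R = NF E (w @ word_pow q n)"
    have e1: "pc_eq E (w @ word_pow q (Suc n)) (R @ q)"
      using pc_eq_appR[OF NF_eq[of "w @ word_pow q n"], of q] R_def by (simp add: word_pow_Suc_right)
    have e2: "pc_eq E (q @ R) (w @ word_pow q (Suc n))"
    proof -
      have "pc_eq E (q @ R) (q @ w @ word_pow q n)"
        using pc_eq_appL[OF pc_eq_sym[OF NF_eq[of "w @ word_pow q n"]], of q] R_def by simp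
      also have "pc_eq E \<dots> ((w @ q) @ word_pow q n)"
        using pc_eq_appR[OF pc_eq_sym[OF wq], of "word_pow q n"] by simp
      finally show ?thesis by (simp add: word_pow_Suc)
    qed
    have "f (Suc n) = pc_len E (w @ word_pow q (Suc n))" unfolding f_def by (simp add: pc_len_NF)
    then show ?thesis using e1 e2 pc_len_cong R_def pc_eq_sym pc_eq_trans by metis
  qed
  have "\<exists>n. f (Suc n) = f n + length q"
  proof (rule ccontr)
    assume "\<not> (\<exists>n. f (Suc n) = f n + length q)"
    then have lt: "f (Suc n) < f n + length q" for n
      using fb[of n] pc_len_self[of "NF E (w @ word_pow q n) @ q"] unfolding f_def by fastforce
    have ind: "f n + n \<le> f 0 + n * length q" for n
    proof (induct n)
      case (Suc n) then show ?case using lt[of n] by simp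
    qed simp
    define N where "N = length w + f 0 + 1"
    have "N * length q \<le> length w + f N" by (rule fa)
    moreover have "f N + N \<le> f 0 + N * length q" by (rule ind)
    ultimately show False unfolding N_def by linarith
  qed
  then obtain n where fn: "f (Suc n) = f n + length q" by blast
  define R where "R = NF E (w @ word_pow q n)"
  have l1: "pc_len E (R @ q) = length (R @ q)" using fb[of n] fn R_def f_def by simp
  have l2: "pc_len E (q @ R) = length (q @ R)" using fb[of n] fn R_def f_def by simp
  have "teq E (R @ q) (q @ R)" using red_pc_teq[OF l1 l2] fb[of n] R_def by simp
  moreover have "pc_eq E (w @ word_pow q n) R" using NF_eq R_def by simp
  ultimately show ?thesis using q_def by blast
qed

end

lemma proj_in: "fst ` set s \<subseteq> B \<Longrightarrow> b \<notin> B \<Longrightarrow> proj a b s = proj a a s"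
  unfolding proj_def by (intro filter_cong) auto
lemma proj_in2: "fst ` set s \<subseteq> B \<Longrightarrow> a \<notin> B \<Longrightarrow> proj a b s = proj b b s"
  unfolding proj_def by (intro filter_cong) auto
lemma proj_out: "fst ` set s \<subseteq> B \<Longrightarrow> a \<notin> B \<Longrightarrow> b \<notin> B \<Longrightarrow> proj a b s = []"
  unfolding proj_def by (auto simp: filter_empty_conv)

context pcg
begin

lemma reduce_pair: "\<not> E a b \<Longrightarrow> (\<forall>s. fst ` set s \<subseteq> B \<longrightarrow> proj a b s = []) \<or>
   (\<exists>a' b'. a' \<in> B \<and> b' \<in> B \<and> \<not> E a' b' \<and> (\<forall>s. fst ` set s \<subseteq> B \<longrightarrow> proj a b s = proj a' b' s))"
proof -
  assume ab: "\<not> E a b"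
  consider "a \<in> B" "b \<in> B" | "a \<in> B" "b \<notin> B" | "a \<notin> B" "b \<in> B" | "a \<notin> B" "b \<notin> B" by blast
  then show ?thesis
  proof cases
    case 1 then show ?thesis using ab by blast
  next
    case 2 then show ?thesis using proj_in[of _ B b a] by (intro disjI2 exI[of _ a]) auto
  next
    case 3 then show ?thesis using proj_in2[of _ B a b] by (intro disjI2 exI[of _ b]) auto
  next
    case 4 then show ?thesis using proj_out[of _ B a b] by blast
  qed
qed

theorem centr:
  assumes cm: "cyc_minimal E v" and rt: "root_element E v"
    and conn: "Phi_connected E (pc_alpha E v)" and wc: "pc_eq E (w @ v) (v @ w)"
  shows "\<exists>s k z. (s = NF E v \<or> s = inv_word (NF E v)) \<and> pc_eq E w (word_pow s k @ z) \<and>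
     (\<forall>l\<in>set z. fst l \<notin> fst ` set (NF E v) \<and> (\<forall>b\<in>fst ` set (NF E v). E b (fst l)))"
proof -
  define q where "q = NF E v"
  define B where "B = fst ` set q"
  have vq: "pc_eq E v q" using NF_eq q_def by simp
  have qne: "q \<noteq> []"
  proof
    assume "q = []"
    then show False using vq root_nonnil[OF rt] by simp
  qed
  obtain R n where wR: "pc_eq E (w @ word_pow q n) R" and tRq: "teq E (R @ q) (q @ R)"
    using centr_pre[OF cm wc] q_def by blast
  have comm_proj: "proj a b R @ proj a b q = proj a b q @ proj a b R" if "\<not> E a b" for a b
    using tRq that unfolding teq_def by simp
  have LS: "\<exists>m k zs. word_pow zs m = proj a b R \<and> word_pow zs k = proj a b q" if "\<not> E a b" for a b
    using comm_append_are_replicate[OF comm_proj[OF that]] unfolding word_pow_def by blast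
  have qpos: "cnt a q > 0" if "a \<in> B" for a using cnt_pos that B_def by simp
  have outL: "E b (fst l)" if l: "l \<in> set R" "fst l \<notin> B" and b: "b \<in> B" for l b
  proof (rule ccontr)
    assume ne: "\<not> E b (fst l)"
    obtain m k zs where zm: "word_pow zs m = proj b (fst l) R" and zk: "word_pow zs k = proj b (fst l) q"
      using LS[OF ne] by blast
    obtain l' where l': "l' \<in> set q" "fst l' = b" using b B_def by auto
    have "l' \<in> set (proj b (fst l) q)" using l' unfolding proj_def by simp
    then have "proj b (fst l) q \<noteq> []" by auto
    then have kpos: "k > 0" using zk by (cases k) auto
    have "l \<in> set (proj b (fst l) R)" unfolding proj_def using l by simp
    then have "l \<in> set (word_pow zs m)" using zm by simp
    then have "l \<in> set zs" using set_word_pow_sub[of zs m] by blast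
    then have "l \<in> set (word_pow zs k)" using set_word_pow[OF kpos, of zs] by simp
    then have "l \<in> set (proj b (fst l) q)" using zk by simp
    then have "l \<in> set q" unfolding proj_def by simp
    then show False using l(2) B_def by auto
  qed
  have ratio: "cnt a R * cnt b q = cnt b R * cnt a q" if ne: "\<not> E a b" for a b
  proof -
    obtain m k zs where zm: "word_pow zs m = proj a b R" and zk: "word_pow zs k = proj a b q"
      using LS[OF ne] by blast
    have "cnt a R = m * cnt a zs" using cnt_proj1[of a b R] zm cnt_pow by metis
    moreover have "cnt a q = k * cnt a zs" using cnt_proj1[of a b q] zk cnt_pow by metis
    moreover have "cnt b R = m * cnt b zs" using cnt_proj2[of b a R] zm cnt_pow by metis
    moreover have "cnt b q = k * cnt b zs" using cnt_proj2[of b a q] zk cnt_pow by metis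
    ultimately show ?thesis by (simp add: ac_simps)
  qed
  have alphaB: "pc_alpha E v = B" using pc_alpha_NF B_def q_def by simp
  obtain x0 where x0: "x0 \<in> B" using qne B_def by fastforce
  have Pall: "cnt x0 R * cnt y q = cnt y R * cnt x0 q" if y: "y \<in> B" for y
  proof -
    have path: "(\<lambda>a b. a \<in> B \<and> b \<in> B \<and> a \<noteq> b \<and> \<not> gens_commute E a b)\<^sup>*\<^sup>* x0 y"
      using conn x0 y alphaB unfolding Phi_connected_def by blast
    then show ?thesis
    proof (induct rule: rtranclp_induct)
      case base then show ?case by simp
    next
      case (step y z)
      have yB: "y \<in> B" and ne: "\<not> E y z" using step(2) gens_commute_E by auto
      have r: "cnt y R * cnt z q = cnt z R * cnt y q" using ratio[OF ne] .
      have d: "cnt y q > 0" using qpos[OF yB] .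
      have "cnt y q * (cnt x0 R * cnt z q) = cnt y q * (cnt z R * cnt x0 q)"
      proof -
        have "cnt y q * (cnt x0 R * cnt z q) = (cnt x0 R * cnt y q) * cnt z q" by (simp add: ac_simps)
        also have "\<dots> = (cnt y R * cnt x0 q) * cnt z q" using step(3) by simp
        also have "\<dots> = cnt x0 q * (cnt y R * cnt z q)" by (simp add: ac_simps)
        also have "\<dots> = cnt x0 q * (cnt z R * cnt y q)" using r by simp
        also have "\<dots> = cnt y q * (cnt z R * cnt x0 q)" by (simp add: ac_simps)
        finally show ?thesis .
      qed
      then show ?case using d by simp
    qed
  qed
  define g where "g = gcd (cnt x0 R) (cnt x0 q)"
  define M where "M = cnt x0 R div g"
  define N where "N = cnt x0 q div g"
  have gpos: "g > 0" using qpos[OF x0] g_def by simp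
  have xR: "cnt x0 R = M * g" using g_def M_def by simp
  have xq: "cnt x0 q = N * g" using g_def N_def by simp
  have Npos: "N > 0" using xq qpos[OF x0] by (cases N) auto
  have cop: "coprime M N" unfolding M_def N_def g_def using qpos[OF x0] by (intro div_gcd_coprime) simp
  have MN: "cnt a R * N = M * cnt a q" if a: "a \<in> B" for a
  proof -
    have "g * (cnt a R * N) = g * (M * cnt a q)"
    proof -
      have "g * (cnt a R * N) = cnt a R * cnt x0 q" using xq by (simp add: ac_simps)
      also have "\<dots> = cnt x0 R * cnt a q" using Pall[OF a] by simp
      also have "\<dots> = g * (M * cnt a q)" using xR by (simp add: ac_simps)
      finally show ?thesis .
    qed
    then show ?thesis using gpos by simp
  qed
  define p' where "p' = filter (\<lambda>l. fst l \<in> B) R"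
  define z where "z = filter (\<lambda>l. fst l \<notin> B) R"
  have p'B: "fst ` set p' \<subseteq> B" unfolding p'_def by auto
  have qB: "fst ` set q \<subseteq> B" unfolding B_def by simp
  have zL: "\<forall>l\<in>set z. fst l \<notin> B \<and> (\<forall>b\<in>B. E b (fst l))" unfolding z_def using outL by auto
  have projRB: "proj a b p' = proj a b R" if "a \<in> B" "b \<in> B" for a b
    unfolding proj_def p'_def filter_filter using that by (intro filter_cong) auto
  have Rpz: "pc_eq E R (p' @ z)"
  proof (rule teq_pc_eq, unfold teq_def, intro allI impI)
    fix a b assume ab: "\<not> E a b"
    show "proj a b R = proj a b (p' @ z)"
    proof (cases "a \<in> B \<or> b \<in> B")
      case True
      have "\<forall>l\<in>set R. (fst l = a \<or> fst l = b) \<longrightarrow> fst l \<in> B"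
      proof (intro ballI impI)
        fix l assume l: "l \<in> set R" "fst l = a \<or> fst l = b"
        show "fst l \<in> B"
        proof (rule ccontr)
          assume nB: "fst l \<notin> B"
          show False
          proof (cases "fst l = a")
            case True
            then have "b \<in> B" using nB \<open>a \<in> B \<or> b \<in> B\<close> by auto
            then have "E b a" using outL[OF l(1) nB] True by simp
            then show False using ab Esym by blast
          next
            case False
            then have "fst l = b" "a \<in> B" using l(2) nB \<open>a \<in> B \<or> b \<in> B\<close> by auto
            then have "E a b" using outL[OF l(1) nB] by simp
            then show False using ab by blast
          qed
        qed
      qed
      then show ?thesis unfolding proj_def p'_def z_def filter_append by (rule filter_split_all)
    next
      case False
      then have "\<forall>l\<in>set R. (fst l = a \<or> fst l = b) \<longrightarrow> \<not> fst l \<in> B" by auto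
      then show ?thesis unfolding proj_def p'_def z_def filter_append by (rule filter_split_none)
    qed
  qed
  have K: "word_pow (proj a b p') N = word_pow (proj a b q) M" if ab: "a \<in> B" "b \<in> B" "\<not> E a b" for a b
  proof -
    obtain m k zs where zm: "word_pow zs m = proj a b R" and zk: "word_pow zs k = proj a b q"
      using LS[OF ab(3)] by blast
    have c1: "cnt a R = m * cnt a zs" using cnt_proj1[of a b R] zm cnt_pow by metis
    have c2: "cnt a q = k * cnt a zs" using cnt_proj1[of a b q] zk cnt_pow by metis
    have cz: "cnt a zs > 0" using qpos[OF ab(1)] c2 by (cases "cnt a zs") auto
    have "cnt a zs * (m * N) = cnt a zs * (k * M)"
      using MN[OF ab(1)] c1 c2 by (simp add: ac_simps)
    then have mN: "m * N = k * M" using cz by simp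
    have "word_pow (proj a b p') N = word_pow zs (m * N)" using projRB[OF ab(1,2)] zm word_pow_mult by metis
    also have "\<dots> = word_pow zs (k * M)" using mN by simp
    also have "\<dots> = word_pow (proj a b q) M" using zk word_pow_mult by metis
    finally show ?thesis .
  qed
  have pow_teq: "teq E (word_pow p' N) (word_pow q M)" unfolding teq_def
  proof (intro allI impI)
    fix a b assume ab: "\<not> E a b"
    show "proj a b (word_pow p' N) = proj a b (word_pow q M)"
      unfolding proj_word_pow
      using reduce_pair[OF ab, of B]
    proof
      assume "\<forall>s. fst ` set s \<subseteq> B \<longrightarrow> proj a b s = []"
      then show "word_pow (proj a b p') N = word_pow (proj a b q) M" using p'B qB by simp
    next
      assume "\<exists>a' b'. a' \<in> B \<and> b' \<in> B \<and> \<not> E a' b' \<and> (\<forall>s. fst ` set s \<subseteq> B \<longrightarrow> proj a b s = proj a' b' s)"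
      then obtain a' b' where h: "a' \<in> B" "b' \<in> B" "\<not> E a' b'" "\<forall>s. fst ` set s \<subseteq> B \<longrightarrow> proj a b s = proj a' b' s"
        by blast
      then show "word_pow (proj a b p') N = word_pow (proj a b q) M" using p'B qB K[OF h(1-3)] by simp
    qed
  qed
  have pcomm: "pc_eq E (p' @ q) (q @ p')"
  proof (rule teq_pc_eq, unfold teq_def, intro allI impI)
    fix a b assume ab: "\<not> E a b"
    show "proj a b (p' @ q) = proj a b (q @ p')"
      unfolding proj_append
      using reduce_pair[OF ab, of B]
    proof
      assume "\<forall>s. fst ` set s \<subseteq> B \<longrightarrow> proj a b s = []"
      then show "proj a b p' @ proj a b q = proj a b q @ proj a b p'" using p'B qB by simp
    next
      assume "\<exists>a' b'. a' \<in> B \<and> b' \<in> B \<and> \<not> E a' b' \<and> (\<forall>s. fst ` set s \<subseteq> B \<longrightarrow> proj a b s = proj a' b' s)"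
      then obtain a' b' where h: "a' \<in> B" "b' \<in> B" "\<not> E a' b'" "\<forall>s. fst ` set s \<subseteq> B \<longrightarrow> proj a b s = proj a' b' s"
        by blast
      then show "proj a b p' @ proj a b q = proj a b q @ proj a b p'"
        using p'B qB projRB[OF h(1,2)] comm_proj[OF h(3)] by simp
    qed
  qed
  have zcomm: "pc_eq E (z @ t) (t @ z)" if "fst ` set t \<subseteq> B" for t
  proof (rule indep_comm, intro ballI)
    fix a b assume "a \<in> set z" "b \<in> set t"
    then have "E (fst b) (fst a)" using zL that by blast
    then show "E (fst a) (fst b)" using Esym by blast
  qed
  have invqB: "fst ` set (word_pow (inv_word q) n) \<subseteq> B"
    using set_word_pow_sub[of "inv_word q" n] set_inv_word_fst[of q] qB by blast
  show ?thesis
  proof (cases "N = 1")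
    case True
    have p'M: "pc_eq E p' (word_pow q M)" using teq_pc_eq[OF pow_teq] True by simp
    have e: "pc_eq E (w @ word_pow q n) (word_pow q M @ z)"
    proof -
      have "pc_eq E (w @ word_pow q n) (p' @ z)" using wR Rpz by (rule pc_eq_trans)
      also have "pc_eq E \<dots> (word_pow q M @ z)" by (rule pc_eq_appR[OF p'M])
      finally show ?thesis .
    qed
    have w1: "pc_eq E w (word_pow q M @ word_pow (inv_word q) n @ z)"
    proof -
      have "pc_eq E w (w @ (word_pow q n @ word_pow (inv_word q) n))"
        using pc_eq_appL[OF pc_eq_sym[OF pow_inv_cancel[of E q n]], of w] by simp
      also have "pc_eq E \<dots> ((word_pow q M @ z) @ word_pow (inv_word q) n)"
        using pc_eq_appR[OF e, of "word_pow (inv_word q) n"] by simp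
      also have "pc_eq E \<dots> (word_pow q M @ (word_pow (inv_word q) n @ z))"
        using pc_eq_appL[OF zcomm[OF invqB], of "word_pow q M"] by simp
      finally show ?thesis by simp
    qed
    show ?thesis
    proof (cases "n \<le> M")
      case True
      have "word_pow q M = word_pow q (M - n) @ word_pow q n" using True word_pow_add[of q "M - n" n] by simp
      then have "pc_eq E (word_pow q M @ word_pow (inv_word q) n @ z) (word_pow q (M - n) @ [] @ z)"
        using pc_eq_ctx[OF pow_inv_cancel[of E q n], of "word_pow q (M - n)" z] by simp
      then have "pc_eq E w (word_pow q (M - n) @ z)" using w1 pc_eq_trans by fastforce
      then show ?thesis using zL q_def B_def by blast
    next
      case False
      have "word_pow (inv_word q) n = word_pow (inv_word q) M @ word_pow (inv_word q) (n - M)"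
        using False word_pow_add[of "inv_word q" M "n - M"] by simp
      then have "pc_eq E (word_pow q M @ word_pow (inv_word q) n @ z) ([] @ word_pow (inv_word q) (n - M) @ z)"
        using pc_eq_ctx[OF pow_inv_cancel[of E q M], of "[]" "word_pow (inv_word q) (n - M) @ z"] by simp
      then have "pc_eq E w (word_pow (inv_word q) (n - M) @ z)" using w1 pc_eq_trans by fastforce
      then show ?thesis using zL q_def B_def by blast
    qed
  next
    case False
    then have N2: "N \<ge> 2" using Npos by simp
    have M0: "M \<noteq> 0"
    proof
      assume "M = 0"
      then have "N = 1" using cop by simp
      then show False using False by simp
    qed
    obtain a b where ab: "M * a = N * b + gcd M N" using bezout_nat[OF M0, of N] by blast
    then have ab1: "M * a = N * b + 1" using cop by simp
    define h where "h = word_pow p' a @ word_pow (inv_word q) b"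
    have c1: "pc_eq E (p' @ inv_word q) (inv_word q @ p')" by (rule pc_eq_comm_inv[OF pcomm])
    have c2: "pc_eq E (word_pow p' a @ word_pow (inv_word q) b) (word_pow (inv_word q) b @ word_pow p' a)"
      by (rule pc_eq_comm_pow2[OF c1])
    have "pc_eq E (word_pow h N) (word_pow (word_pow p' a) N @ word_pow (word_pow (inv_word q) b) N)"
      unfolding h_def by (rule pc_eq_prod_pow[OF c2])
    also have "word_pow (word_pow p' a) N = word_pow (word_pow p' N) a"
      by (metis word_pow_mult mult.commute)
    also have "word_pow (word_pow (inv_word q) b) N = word_pow (inv_word q) (N * b)"
      by (metis word_pow_mult mult.commute)
    also have "pc_eq E (word_pow (word_pow p' N) a @ word_pow (inv_word q) (N * b))
                       (word_pow (word_pow q M) a @ word_pow (inv_word q) (N * b))"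
      by (rule pc_eq_appR, rule pc_eq_pow, rule teq_pc_eq[OF pow_teq])
    also have "word_pow (word_pow q M) a = q @ word_pow q (N * b)"
      using ab1 by (metis word_pow_mult word_pow_Suc Suc_eq_plus1 add.commute)
    also have "pc_eq E ((q @ word_pow q (N * b)) @ word_pow (inv_word q) (N * b)) (q @ [])"
      using pc_eq_appL[OF pow_inv_cancel[of E q "N * b"], of q] by simp
    finally have "pc_eq E (word_pow h N) q" by simp
    then have "pc_eq E v (word_pow h N)" using vq pc_eq_sym pc_eq_trans by blast
    then show ?thesis using rt N2 unfolding root_element_def by blast
  qed
qed

end

context pcg
begin

lemma gens_sub: "pc_eq E w t \<Longrightarrow> pc_len E w = length w \<Longrightarrow> fst ` set t \<subseteq> Y \<Longrightarrow> fst ` set w \<subseteq> Y"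
proof -
  assume wt: "pc_eq E w t" and m: "pc_len E w = length w" and t: "fst ` set t \<subseteq> Y"
  have "pc_eq E (restr Y w) (restr Y t)" by (rule pc_eq_restr[OF wt])
  then have "pc_eq E w (restr Y w)" using restr_id[OF t] wt pc_eq_sym pc_eq_trans by metis
  then have "pc_len E w \<le> length (restr Y w)" by (rule pc_len_le)
  then have "length (restr Y w) = length w" using m length_restr[of Y w] by simp
  then show ?thesis by (rule length_restr_eq)
qed

lemma pc_len_NF_self: "pc_len E (NF E v) = length (NF E v)"
  using pc_len_NF NF_NF by metis

lemma main:
  assumes cmu: "cyc_minimal E u" and rtu: "root_element E u" and blu: "is_block E u"
    and cmv: "cyc_minimal E v" and rtv: "root_element E v" and blv: "is_block E v"
    and len: "pc_len E (inv_word g @ u @ g) = pc_len E (inv_word g) + pc_len E u + pc_len E g"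
    and cu: "pc_eq E (u @ v) (v @ u)"
    and cw: "pc_eq E ((inv_word g @ u @ g) @ v) (v @ (inv_word g @ u @ g))"
  shows "pc_eq E (g @ v) (v @ g)"
proof -
  define q where "q = NF E v"
  define B where "B = fst ` set q"
  define L where "L = {y. y \<notin> B \<and> (\<forall>b\<in>B. E b y)}"
  define u0 where "u0 = NF E u"
  define A where "A = fst ` set u0"
  have connv: "Phi_connected E (pc_alpha E v)" using blv unfolding is_block_def by blast
  have connu: "Phi_connected E A" using blu pc_alpha_NF unfolding is_block_def A_def u0_def by metis
  have vq: "pc_eq E v q" using NF_eq q_def by simp
  have uu0: "pc_eq E u u0" using NF_eq u0_def by simp
  have u0m: "pc_len E u0 = length u0" using pc_len_NF_self u0_def by simp
  have qm: "pc_len E q = length q" using pc_len_NF_self q_def by simp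
  have BL: "B \<inter> L = {}" unfolding L_def by auto
  have sB: "fst ` set s \<subseteq> B" if "s = q \<or> s = inv_word q" for s
  proof -
    have "fst ` set (inv_word q) = B" using B_def set_inv_word_fst[of q] by simp
    note hB = this
    from that show ?thesis
    proof
      assume "s = q" then show ?thesis by (simp add: B_def)
    next
      assume "s = inv_word q" then show ?thesis using hB by simp
    qed
  qed
  have spowB: "fst ` set (word_pow s k) \<subseteq> B" if "s = q \<or> s = inv_word q" for s k
    using sB[OF that] set_word_pow_sub[of s k] by blast
  have zLs: "fst ` set z \<subseteq> L" if "\<forall>l\<in>set z. fst l \<notin> B \<and> (\<forall>b\<in>B. E b (fst l))" for z
    using that unfolding L_def by auto
  have restrB: "pc_eq E (restr B w) (word_pow s k)"
    if "pc_eq E w (word_pow s k @ z)" "s = q \<or> s = inv_word q" "fst ` set z \<subseteq> L" for w s k z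
  proof -
    have "pc_eq E (restr B w) (restr B (word_pow s k @ z))" by (rule pc_eq_restr[OF that(1)])
    moreover have "restr B (word_pow s k @ z) = word_pow s k"
      using restr_id[OF spowB[OF that(2)]] restr_nil[of z B] that(3) BL by auto
    ultimately show ?thesis by simp
  qed
  have restrL: "pc_eq E (restr L w) z"
    if "pc_eq E w (word_pow s k @ z)" "s = q \<or> s = inv_word q" "fst ` set z \<subseteq> L" for w s k z
  proof -
    have "pc_eq E (restr L w) (restr L (word_pow s k @ z))" by (rule pc_eq_restr[OF that(1)])
    moreover have "restr L (word_pow s k @ z) = z"
      using restr_id[OF that(3)] restr_nil[of "word_pow s k" L] spowB[OF that(2), of k] BL by auto
    ultimately show ?thesis by simp
  qed
  have zcomm: "pc_eq E (z @ t) (t @ z)" if "fst ` set z \<subseteq> L" "fst ` set t \<subseteq> B" for z t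
  proof (rule indep_comm, intro ballI)
    fix a b assume "a \<in> set z" "b \<in> set t"
    then have "fst a \<in> L" "fst b \<in> B" using that by auto
    then have "E (fst b) (fst a)" unfolding L_def by auto
    then show "E (fst a) (fst b)" using Esym by blast
  qed
  obtain s k z where s: "s = q \<or> s = inv_word q" and us: "pc_eq E u (word_pow s k @ z)"
      and zL0: "\<forall>l\<in>set z. fst l \<notin> B \<and> (\<forall>b\<in>B. E b (fst l))"
    using centr[OF cmv rtv connv cu] q_def B_def by blast
  have zL: "fst ` set z \<subseteq> L" by (rule zLs[OF zL0])
  have caseD: "A \<subseteq> L \<or> pc_eq E u s"
  proof (cases "pc_eq E (word_pow s k) []")
    case True
    have "pc_eq E u0 z"
    proof -
      have "pc_eq E u0 u" using uu0 pc_eq_sym by blast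
      also have "pc_eq E u (word_pow s k @ z)" by (rule us)
      also have "pc_eq E \<dots> ([] @ z)" by (rule pc_eq_appR[OF True])
      finally show ?thesis by simp
    qed
    then have "A \<subseteq> L" using gens_sub u0m zL A_def by blast
    then show ?thesis by blast
  next
    case sk: False
    show ?thesis
    proof (cases "pc_eq E z []")
      case True
      have usk: "pc_eq E u (word_pow s k)"
        using us pc_eq_appL[OF True, of "word_pow s k"] pc_eq_trans by fastforce
      have "k \<noteq> 0"
      proof
        assume "k = 0"
        then show False using usk root_nonnil[OF rtu] by simp
      qed
      moreover have "\<not> k \<ge> 2" using usk rtu unfolding root_element_def by blast
      ultimately have "k = 1" by simp
      then show ?thesis using usk by simp
    next
      case zn: False
      have AB: "A \<inter> B \<noteq> {}"
      proof
        assume "A \<inter> B = {}"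
        then have "restr B u0 = []" using restr_nil A_def by blast
        moreover have "pc_eq E (restr B u0) (word_pow s k)"
          using restrB[OF _ s zL] uu0 us pc_eq_sym pc_eq_trans by metis
        ultimately show False using sk pc_eq_sym by fastforce
      qed
      have AL: "A \<inter> L \<noteq> {}"
      proof
        assume "A \<inter> L = {}"
        then have "restr L u0 = []" using restr_nil A_def by blast
        moreover have "pc_eq E (restr L u0) z"
          using restrL[OF _ s zL] uu0 us pc_eq_sym pc_eq_trans by metis
        ultimately show False using zn pc_eq_sym by fastforce
      qed
      have ABL: "A \<subseteq> B \<union> L"
      proof -
        have "pc_eq E u0 (word_pow s k @ z)" using uu0 us pc_eq_sym pc_eq_trans by metis
        moreover have "fst ` set (word_pow s k @ z) \<subseteq> B \<union> L" using spowB[OF s, of k] zL by auto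
        ultimately show ?thesis using gens_sub u0m A_def by blast
      qed
      obtain a where a: "a \<in> A" "a \<in> B" using AB by blast
      obtain c where c: "c \<in> A" "c \<in> L" using AL by blast
      have path: "(\<lambda>x y. x \<in> A \<and> y \<in> A \<and> x \<noteq> y \<and> \<not> gens_commute E x y)\<^sup>*\<^sup>* a c"
        using connu a c unfolding Phi_connected_def by blast
      have "c \<in> B" using path
      proof (induct rule: rtranclp_induct)
        case base then show ?case using a by simp
      next
        case (step y y')
        have "\<not> E y y'" using step(2) gens_commute_E by blast
        moreover have "y' \<in> B \<union> L" using step(2) ABL by blast
        ultimately show ?case using step(3) unfolding L_def by blast
      qed
      then show ?thesis using c BL by blast
    qed
  qed
  define w where "w = inv_word g @ u @ g"
  define g0 where "g0 = NF E g"
  define w0 where "w0 = inv_word g0 @ u0 @ g0"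
  have gg0: "pc_eq E g g0" using NF_eq g0_def by simp
  have ww0: "pc_eq E w w0" unfolding w_def w0_def
    by (intro pc_eq_app pc_eq_inv gg0 uu0)
  have w0m: "pc_len E w0 = length w0"
  proof -
    have "length w0 = pc_len E (inv_word g) + pc_len E u + pc_len E g"
      unfolding w0_def using pc_len_inv[of g] pc_len_NF[of g] pc_len_NF[of u] g0_def u0_def by simp
    also have "\<dots> = pc_len E w" using len w_def by simp
    also have "\<dots> = pc_len E w0" by (rule pc_len_cong[OF ww0])
    finally show ?thesis by simp
  qed
  obtain s' k' z' where s': "s' = q \<or> s' = inv_word q" and ws: "pc_eq E w (word_pow s' k' @ z')"
      and zL0': "\<forall>l\<in>set z'. fst l \<notin> B \<and> (\<forall>b\<in>B. E b (fst l))"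
    using centr[OF cmv rtv connv, of w] cw q_def B_def w_def by blast
  have zL': "fst ` set z' \<subseteq> L" by (rule zLs[OF zL0'])
  have ugw: "pc_eq E u (g @ w @ inv_word g)"
  proof -
    have "pc_eq E u ((g @ inv_word g) @ u @ (g @ inv_word g))"
      using pc_eq_ctx[OF pc_eq_sym[OF pc_eq_inv_right[of E g]], of "[]" "u @ g @ inv_word g"]
            pc_eq_ctx[OF pc_eq_sym[OF pc_eq_inv_right[of E g]], of "u" "[]"] pc_eq_trans by fastforce
    then show ?thesis unfolding w_def by simp
  qed
  show ?thesis
  proof (cases "A \<subseteq> L")
    case True
    have "restr B u0 = []" using True BL A_def by (intro restr_nil) auto
    then have rBu: "pc_eq E (restr B u) []" using pc_eq_restr[OF uu0, of B] by simp
    have "pc_eq E (restr B w) (inv_word (restr B g) @ [] @ restr B g)"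
      unfolding w_def restr_append restr_inv by (rule pc_eq_ctx[OF rBu])
    then have "pc_eq E (restr B w) []" using pc_eq_inv_left[of E "restr B g"] pc_eq_trans by fastforce
    then have "pc_eq E (word_pow s' k') []" using restrB[OF ws s' zL'] pc_eq_sym pc_eq_trans by blast
    then have "pc_eq E w z'" using ws pc_eq_appR[of E "word_pow s' k'" "[]" z'] pc_eq_trans by fastforce
    then have "pc_eq E w0 z'" using ww0 pc_eq_sym pc_eq_trans by blast
    then have "fst ` set w0 \<subseteq> L" using gens_sub w0m zL' by blast
    then have gL: "fst ` set g0 \<subseteq> L" unfolding w0_def by auto
    have "pc_eq E (g0 @ q) (q @ g0)" by (rule zcomm[OF gL]) (simp add: B_def)
    then show ?thesis using gg0 vq pc_eq_app pc_eq_sym pc_eq_trans by metis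
  next
    case False
    then have us1: "pc_eq E u s" using caseD by blast
    have "restr L s = []" using sB[OF s] BL by (intro restr_nil) auto
    then have rLu: "pc_eq E (restr L u) []" using pc_eq_restr[OF us1, of L] by simp
    have "pc_eq E (restr L w) (inv_word (restr L g) @ [] @ restr L g)"
      unfolding w_def restr_append restr_inv by (rule pc_eq_ctx[OF rLu])
    then have "pc_eq E (restr L w) []" using pc_eq_inv_left[of E "restr L g"] pc_eq_trans by fastforce
    then have "pc_eq E z' []" using restrL[OF ws s' zL'] pc_eq_sym pc_eq_trans by blast
    then have wk: "pc_eq E w (word_pow s' k')"
      using ws pc_eq_appL[of E z' "[]" "word_pow s' k'"] pc_eq_trans by fastforce
    have ugs: "pc_eq E u (g @ word_pow s' k' @ inv_word g)"
      using ugw pc_eq_ctx[OF wk, of g "inv_word g"] pc_eq_trans by blast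
    have "k' \<noteq> 0"
    proof
      assume "k' = 0"
      then have "pc_eq E u (g @ inv_word g)" using ugs by simp
      then have "pc_eq E u []" using pc_eq_inv_right pc_eq_trans by blast
      then show False using root_nonnil[OF rtu] by blast
    qed
    moreover have "\<not> k' \<ge> 2"
    proof
      assume k2: "k' \<ge> 2"
      have "pc_eq E (word_pow (inv_word (inv_word g) @ s' @ inv_word g) k') (inv_word (inv_word g) @ word_pow s' k' @ inv_word g)"
        by (rule pc_eq_conj_pow)
      then have "pc_eq E u (word_pow (g @ s' @ inv_word g) k')" using ugs pc_eq_sym pc_eq_trans by fastforce
      then show False using rtu k2 unfolding root_element_def by blast
    qed
    ultimately have "k' = 1" by simp
    then have "pc_eq E w s'" using wk by simp
    then have "pc_len E w = pc_len E s'" by (rule pc_len_cong)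
    moreover have "pc_len E s' = length q" using s' qm pc_len_inv[of q] by auto
    moreover have "pc_len E u = length q" using pc_len_cong[OF us1] s qm pc_len_inv[of q] by auto
    ultimately have "pc_len E g = 0" using len w_def pc_len_inv[of g] by simp
    then have "pc_eq E g []" by (rule pc_eq_nil_len)
    then have "pc_eq E (g @ v) (v @ [])" using pc_eq_appR[of E g "[]" v] by simp
    moreover have "pc_eq E (v @ []) (v @ g)" using pc_eq_appL[OF pc_eq_sym[OF \<open>pc_eq E g []\<close>], of v] .
    ultimately show ?thesis by (rule pc_eq_trans)
  qed
qed

end

theorem corollary2p6:
  fixes E :: "'a::finite \<Rightarrow> 'a \<Rightarrow> bool"
    and u v g :: "'a letter list"
  assumes "symp E" and "irreflp E"
    and "cyc_minimal E u" and "root_element E u" and "is_block E u"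
    and "cyc_minimal E v" and "root_element E v" and "is_block E v"
    and "pc_len E (inv_word g @ u @ g) = pc_len E (inv_word g) + pc_len E u + pc_len E g"
    and "in_centraliser E u v"
    and "in_centraliser E (inv_word g @ u @ g) v"
  shows "in_centraliser E g v"
proof -
  interpret pcg E using assms(1,2) by unfold_locales
  show ?thesis using main[OF assms(3-9)] assms(10,11) unfolding in_centraliser_def by blast
qed

end
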